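(* Let $K$ be a field of characteristic zero, let $L$ be a $K$-linear functional on $K[u]$ with moments $\mu_s=L(u^s)$, and let $(p_n(x))_{n\ge0}$ be monic polynomials over $K$ with $\deg p_n=n$ and $L(p_m p_n)=\omega_n\delta_{m,n}$, $\omega_n\neq0$ for all $n$. Write $\int f(u)\,d\mu(u)$ for $L(f)$, and put $q_n(y)=\int \frac{p_n(u)}{y-u}\,d\mu(u)$. Let $k,m,n$ be non-negative integers and $x_1,\dots,x_m$, $y_1,\dots,y_k$ variables. If $n\ge k$, then $$ \frac{\det\limits_{0\le i,j\le n-1}\left(\int u^{i+j}\frac{\prod_{\ell=1}^m(u-x_\ell)}{\prod_{\ell=1}^k(u-y_\ell)}\,d\mu(u)\right)}{\det\limits_{0\le i,j\le n-k-1}(\mu_{i+j})} =(-1)^{n(m-k)+km}\frac{\det M}{\left(\prod_{1\le i<j\le m}(x_j-x_i)\right)\left(\prod_{1\le i<j\le k}(y_i-y_j)\right)}, $$ where $M$ is the $(m+k)\times(m+k)$ matrix whose $i$-th row, for $1\le i\le m$, is $\big(p_{n-k}(x_i),p_{n-k+1}(x_i),\dots,p_{n+m-1}(x_i)\big)$ and whose $(m+i)$-th row, for $1\le i\le k$, is $\big(q_{n-k}(y_i),q_{n-k+1}(y_i),\dots,q_{n+m-1}(y_i)\big)$. If $n<k$, then $$ \det\limits_{0\le i,j\le n-1}\left(\int u^{i+j}\frac{\prod_{\ell=1}^m(u-x_\ell)}{\prod_{\ell=1}^k(u-y_\ell)}\,d\mu(u)\right) =(-1)^{n(m-k)+km}\frac{\det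 N}{\left(\prod_{1\le i<j\le m}(x_j-x_i)\right)\left(\prod_{1\le i<j\le k}(y_i-y_j)\right)}, $$ where $N$ is the $(m+k)\times(m+k)$ matrix whose $i$-th row, for $1\le i\le m$, is $\big(0,\dots,0,p_0(x_i),p_1(x_i),\dots,p_{n+m-1}(x_i)\big)$ (with $k-n$ leading zeros) and whose $(m+i)$-th row, for $1\le i\le k$, is $\big(y_i^{k-n-1},\dots,y_i^2,y_i,1,q_0(y_i),q_1(y_i),\dots,q_{n+m-1}(y_i)\big)$. Determinants of empty matrices and empty products equal $1$.
   Context: The notation $\int f(u)\,d\mu(u)$ means $L(f)$; it may be read analytically (if $L$ is given by a measure $d\mu$) or formally: expressions involving $1/(u-y)$ for a variable $y$ are interpreted by expanding $\frac{1}{u-y}=-\sum_{i\ge0}u^iy^{-i-1}$ (equivalently $\frac1{y-u}=\sum_{i\ge0}u^iy^{-i-1}$) as formal power series in $1/y$ and applying $L$ coefficientwise. In particular $q_n(y)=\sum_{i\ge0}L(u^ip_n(u))\,y^{-i-1}$ is a formal power series in $1/y$. The left-hand numerator is the Hankel determinant of the moments of the functional $p(u)\mapsto\int p(u)\frac{\prod_{\ell=1}^m(u-x_\ell)}{\prod_{\ell=1}^k(u-y_\ell)}\,d\mu(u)$. Under the orthogonality assumption the Hankel determinants $\det_{0\le i,j\le n-1}(\mu_{i+j})$ are all non-zero. *)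

theory Defs
  imports "HOL-Computational_Algebra.Formal_Laurent_Series"
          "HOL-Computational_Algebra.Polynomial"
          "Jordan_Normal_Form.Determinant"
begin

(* The formal expansions in 1/y are
   realised as formal Laurent series (type fls) in an auxiliary variable t:
   a value y with negative t-subdegree is "large", so y^(-1) has positive
   subdegree and the expansion 1/(u-y) = - sum_i u^i y^(-i-1) converges
   t-adically.  Integrands are Laurent series whose coefficients are
   polynomials in u ('a poly fls); the functional L is applied coefficientwise. *)

definition fls_cpoly :: "'a::zero fls \<Rightarrow> 'a poly fls" where
  "fls_cpoly f = Abs_fls (\<lambda>n. [: fls_nth f n :])"

definition fls_u :: "'a::{zero,one} poly fls" where
  "fls_u = fls_const [:0, 1:]"

definition inv_u_minus :: "'a::field fls \<Rightarrow> 'a poly fls" where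
  "inv_u_minus y = - (\<Sum>i. fls_u ^ i * fls_cpoly (inverse y) ^ (i + 1))"

definition inv_minus_u :: "'a::field fls \<Rightarrow> 'a poly fls" where
  "inv_minus_u y = (\<Sum>i. fls_u ^ i * fls_cpoly (inverse y) ^ (i + 1))"

definition fls_integral_L :: "('a::zero poly \<Rightarrow> 'a) \<Rightarrow> 'a poly fls \<Rightarrow> 'a fls" where
  "fls_integral_L L F = Abs_fls (\<lambda>n. if n < fls_subdegree F then 0 else L (fls_nth F n))"

definition moment :: "('a::comm_semiring_1 poly \<Rightarrow> 'a) \<Rightarrow> nat \<Rightarrow> 'a" where
  "moment L s = L (monom 1 s)"

definition q_fun :: "('a::field poly \<Rightarrow> 'a) \<Rightarrow> (nat \<Rightarrow> 'a poly) \<Rightarrow> nat \<Rightarrow> 'a fls \<Rightarrow> 'a fls" where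
  "q_fun L p n y = fls_integral_L L (fls_const (p n) * inv_minus_u y)"

definition mod_moment ::
  "('a::field poly \<Rightarrow> 'a) \<Rightarrow> nat \<Rightarrow> (nat \<Rightarrow> 'a) \<Rightarrow> nat \<Rightarrow> (nat \<Rightarrow> 'a fls) \<Rightarrow> nat \<Rightarrow> 'a fls" where
  "mod_moment L m x k y s =
     fls_integral_L L
       (fls_const (monom 1 s * (\<Prod>l\<in>{1..m}. [:- x l, 1:])) * (\<Prod>l\<in>{1..k}. inv_u_minus (y l)))"

end

theory Submission
  imports Defs
begin

section \<open>Convolution with explicit lower bounds\<close>

definition vanish_below :: "'b::zero fls \<Rightarrow> int \<Rightarrow> bool" where
  "vanish_below f a \<longleftrightarrow> (\<forall>i<a. fls_nth f i = 0)"

lemma vanish_below_subdeg: "vanish_below f (fls_subdegree f)"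
  by (simp add: vanish_below_def)

lemma vanish_below_mono: "vanish_below f a \<Longrightarrow> b \<le> a \<Longrightarrow> vanish_below f b"
  by (simp add: vanish_below_def)

lemma vanish_below_le_subdeg:
  assumes "vanish_below f a" "f \<noteq> 0"
  shows "a \<le> fls_subdegree f"
  using assms by (intro fls_subdegree_geI) (auto simp: vanish_below_def)

lemma fls_times_nth_gen:
  fixes f g :: "'b::comm_semiring_0 fls"
  assumes "vanish_below f a" "vanish_below g b"
  shows "fls_nth (f * g) n = (\<Sum>i=a..n-b. fls_nth f i * fls_nth g (n - i))"
proof (cases "f = 0 \<or> g = 0")
  case True
  then show ?thesis by auto
next
  case False
  then have fa: "a \<le> fls_subdegree f" and gb: "b \<le> fls_subdegree g"
    using assms vanish_below_le_subdeg by blast+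
  have "fls_nth (f * g) n = (\<Sum>i=fls_subdegree f..n - fls_subdegree g. fls_nth f i * fls_nth g (n - i))"
    by (rule fls_times_nth(2))
  also have "\<dots> = (\<Sum>i=a..n-b. fls_nth f i * fls_nth g (n - i))"
  proof (rule sum.mono_neutral_left)
    show "finite {a..n - b}" by simp
    show "{fls_subdegree f..n - fls_subdegree g} \<subseteq> {a..n - b}" using fa gb by auto
    show "\<forall>i\<in>{a..n - b} - {fls_subdegree f..n - fls_subdegree g}. fls_nth f i * fls_nth g (n - i) = 0"
    proof
      fix i assume "i \<in> {a..n - b} - {fls_subdegree f..n - fls_subdegree g}"
      then have "i < fls_subdegree f \<or> n - i < fls_subdegree g" by auto
      then show "fls_nth f i * fls_nth g (n - i) = 0" by auto
    qed
  qed
  finally show ?thesis .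
qed

lemma vanish_below_mult:
  fixes f g :: "'b::comm_semiring_0 fls"
  assumes "vanish_below f a" "vanish_below g b"
  shows "vanish_below (f * g) (a + b)"
  unfolding vanish_below_def
proof (intro allI impI)
  fix i assume "i < a + b"
  then show "fls_nth (f * g) i = 0" by (simp add: fls_times_nth_gen[OF assms])
qed

lemma vanish_below_power:
  fixes f :: "'b::comm_semiring_1 fls"
  assumes "vanish_below f a" "a \<ge> 0"
  shows "vanish_below (f ^ N) (int N * a)"
proof (induction N)
  case 0
  then show ?case using assms by (simp add: vanish_below_def)
next
  case (Suc N)
  have "vanish_below (f * f ^ N) (a + int N * a)"
    by (rule vanish_below_mult[OF assms(1) Suc])
  then show ?case by (simp add: algebra_simps)
qed

lemma vanish_below_add:
  "vanish_below f a \<Longrightarrow> vanish_below g a \<Longrightarrow> vanish_below (f + g) (a::int)"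
  by (simp add: vanish_below_def)

lemma vanish_below_const: "vanish_below (fls_const c) 0"
  by (simp add: vanish_below_def)

section \<open>Convergence in the fls metric\<close>

lemma fls_tendsto_vanish:
  fixes X :: "nat \<Rightarrow> 'b::group_add fls"
  assumes "\<And>N. vanish_below (X N - z) (int N - K)"
  shows "X \<longlonglongrightarrow> z"
proof (rule metric_LIMSEQ_I)
  fix r :: real assume r: "r > 0"
  obtain M :: nat where M: "inverse r < 2 ^ M"
    using real_arch_pow[of 2 "inverse r"] by auto
  have "inverse (2 ^ M) < r"
    using M r by (simp add: field_simps)
  show "\<exists>no. \<forall>n\<ge>no. dist (X n) z < r"
  proof (intro exI allI impI)
    fix N assume N: "nat (K + int M) \<le> N"
    show "dist (X N) z < r"
    proof (cases "X N = z")
      case True then show ?thesis using r by simp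
    next
      case False
      then have ne: "X N - z \<noteq> 0" by simp
      have "int N - K \<le> fls_subdegree (X N - z)"
        using vanish_below_le_subdeg[OF assms ne] .
      then have sd: "int M \<le> fls_subdegree (X N - z)" using N by linarith
      then have "dist (X N) z = inverse (2 ^ nat (fls_subdegree (X N - z)))"
        using False by (simp add: dist_fls_def)
      also have "\<dots> \<le> inverse (2 ^ M)"
        using sd by (intro le_imp_inverse_le) (auto intro!: power_increasing)
      also have "\<dots> < r" by fact
      finally show ?thesis .
    qed
  qed
qed

definition fls_series_lim :: "(nat \<Rightarrow> 'b::ab_group_add fls) \<Rightarrow> 'b fls" where
  "fls_series_lim t = Abs_fls (\<lambda>n. \<Sum>i<nat n + 1. fls_nth (t i) n)"

lemma fls_partial_vanish:
  fixes t :: "nat \<Rightarrow> 'b::ab_group_add fls"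
  assumes t: "\<And>i. vanish_below (t i) (int i + 1)"
  shows "vanish_below ((\<Sum>i<N. t i) - fls_series_lim t) (int N)"
proof -
  define s where "s = fls_series_lim t"
  have tz: "fls_nth (t i) n = 0" if "n \<le> int i" for i n
    using t[of i] that by (simp add: vanish_below_def)
  have s_nth: "fls_nth s n = (\<Sum>i<nat n + 1. fls_nth (t i) n)" for n
    unfolding s_def fls_series_lim_def
  proof (rule nth_Abs_fls_lower_bound[of 0])
    show "\<forall>n<0. (\<Sum>i<nat n + 1. fls_nth (t i) n) = 0" using tz by simp
  qed
  show ?thesis
      unfolding vanish_below_def s_def[symmetric]
    proof (intro allI impI)
      fix n assume n: "n < int N"
      have "fls_nth ((\<Sum>i<N. t i) - s) n = (\<Sum>i<N. fls_nth (t i) n) - (\<Sum>i<nat n + 1. fls_nth (t i) n)"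
        by (simp add: fls_nth_sum s_nth)
      also have "(\<Sum>i<N. fls_nth (t i) n) = (\<Sum>i<nat n + 1. fls_nth (t i) n)"
      proof (cases "n < 0")
        case True
        then show ?thesis using tz by (simp add: sum.neutral)
      next
        case False
        then have sub: "{..<nat n + 1} \<subseteq> {..<N}" using n by auto
        show ?thesis
        proof (rule sum.mono_neutral_right[OF _ sub])
          show "\<forall>i\<in>{..<N} - {..<nat n + 1}. fls_nth (t i) n = 0"
            using False tz by auto
        qed simp
      qed
      finally show "fls_nth ((\<Sum>i<N. t i) - s) n = 0" by simp
    qed
qed

lemma fls_sums_vanish:
  fixes t :: "nat \<Rightarrow> 'b::ab_group_add fls"
  assumes t: "\<And>i. vanish_below (t i) (int i + 1)"
  shows "t sums fls_series_lim t"
  unfolding sums_def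
  by (rule fls_tendsto_vanish[where K=0]) (use fls_partial_vanish[OF t] in simp)

lemma fls_cpoly_nth: "fls_nth (fls_cpoly c) n = [: fls_nth c n :]"
proof -
  obtain N where N: "\<forall>n<N. fls_nth c n = 0" by (rule fls_nth_vanishes_belowE)
  show ?thesis unfolding fls_cpoly_def
    by (rule nth_Abs_fls_lower_bound[of N]) (use N in auto)
qed

lemma vanish_below_cpoly: "vanish_below c a \<Longrightarrow> vanish_below (fls_cpoly c) a"
  by (simp add: vanish_below_def fls_cpoly_nth)

lemma fls_cpoly_0[simp]: "fls_cpoly 0 = 0"
  by (rule fls_eqI) (simp add: fls_cpoly_nth)

lemma fls_cpoly_add: "fls_cpoly (a + b) = fls_cpoly a + fls_cpoly b"
  by (rule fls_eqI) (simp add: fls_cpoly_nth)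

lemma fls_cpoly_uminus: "fls_cpoly (- a) = - fls_cpoly (a::'b::ab_group_add fls)"
  by (rule fls_eqI) (simp add: fls_cpoly_nth)

lemma fls_cpoly_diff: "fls_cpoly (a - b) = fls_cpoly a - fls_cpoly (b::'b::ab_group_add fls)"
  by (rule fls_eqI) (simp add: fls_cpoly_nth)

lemma fls_cpoly_const: "fls_cpoly (fls_const c) = fls_const [:c:]"
  by (rule fls_eqI) (simp add: fls_cpoly_nth)

lemma fls_cpoly_1[simp]: "fls_cpoly (1::'b::comm_ring_1 fls) = 1"
  by (metis fls_const_1 fls_cpoly_const one_pCons)

lemma sum_pCons_const: "(\<Sum>i\<in>S. [:f i:]) = [:\<Sum>i\<in>S. f i:]"
  by (induction S rule: infinite_finite_induct) simp_all

lemma fls_cpoly_mult: "fls_cpoly (a * b) = fls_cpoly a * fls_cpoly (b::'b::comm_ring_1 fls)"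
proof (rule fls_eqI)
  fix n
  have va: "vanish_below (fls_cpoly a) (fls_subdegree a)"
    by (rule vanish_below_cpoly[OF vanish_below_subdeg])
  have vb: "vanish_below (fls_cpoly b) (fls_subdegree b)"
    by (rule vanish_below_cpoly[OF vanish_below_subdeg])
  have "fls_nth (fls_cpoly a * fls_cpoly b) n =
     (\<Sum>i=fls_subdegree a..n-fls_subdegree b. [:fls_nth a i:] * [:fls_nth b (n - i):])"
    by (simp add: fls_times_nth_gen[OF va vb] fls_cpoly_nth)
  also have "\<dots> = [: \<Sum>i=fls_subdegree a..n-fls_subdegree b. fls_nth a i * fls_nth b (n - i) :]"
    by (simp add: sum_pCons_const mult.commute)
  also have "\<dots> = fls_nth (fls_cpoly (a * b)) n"
    by (simp add: fls_cpoly_nth fls_times_nth_gen[OF vanish_below_subdeg vanish_below_subdeg])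
  finally show "fls_nth (fls_cpoly (a * b)) n = fls_nth (fls_cpoly a * fls_cpoly b) n" ..
qed

lemma fls_cpoly_power: "fls_cpoly (a ^ k) = fls_cpoly (a::'b::comm_ring_1 fls) ^ k"
  by (induction k) (simp_all add: fls_cpoly_mult)

locale linfun =
  fixes L :: "'a::field poly \<Rightarrow> 'a"
  assumes L_add: "\<And>f g. L (f + g) = L f + L g"
    and L_smult: "\<And>c f. L (Polynomial.smult c f) = c * L f"
begin

lemma L_0[simp]: "L 0 = 0"
  using L_smult[of 0 0] by simp

lemma L_sum: "L (\<Sum>i\<in>S. f i) = (\<Sum>i\<in>S. L (f i))"
  by (induction S rule: infinite_finite_induct) (simp_all add: L_add)

lemma L_uminus: "L (- f) = - L f"
  using L_smult[of "-1" f] by simp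

lemma L_diff: "L (f - g) = L f - L g"
  using L_add[of f "- g"] by (simp add: L_uminus)

lemma L_const_mult: "L ([:c:] * f) = c * L f"
  by (simp add: L_smult)

abbreviation I where "I \<equiv> fls_integral_L L"

lemma I_nth: "fls_nth (I F) n = L (fls_nth F n)"
  unfolding fls_integral_L_def
  by (subst nth_Abs_fls_lower_bound[of "fls_subdegree F"]) auto

lemma vanish_below_I: "vanish_below F a \<Longrightarrow> vanish_below (I F) a"
  by (simp add: vanish_below_def I_nth)

lemma I_add: "I (F + G) = I F + I G"
  by (rule fls_eqI) (simp add: I_nth L_add)

lemma I_uminus: "I (- F) = - I F"
  by (rule fls_eqI) (simp add: I_nth L_uminus)

lemma I_diff: "I (F - G) = I F - I G"
  by (rule fls_eqI) (simp add: I_nth L_diff)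

lemma I_0[simp]: "I 0 = 0"
  by (rule fls_eqI) (simp add: I_nth)

lemma I_sum: "I (\<Sum>i\<in>S. F i) = (\<Sum>i\<in>S. I (F i))"
  by (induction S rule: infinite_finite_induct) (simp_all add: I_add)

lemma I_const: "I (fls_const f) = fls_const (L f)"
  by (rule fls_eqI) (simp add: I_nth)

lemma I_cpoly_mult: "I (fls_cpoly c * F) = c * I F"
proof (rule fls_eqI)
  fix n
  obtain a where a: "\<forall>n<a. fls_nth c n = 0" by (rule fls_nth_vanishes_belowE)
  have va: "vanish_below c a" using a by (simp add: vanish_below_def)
  have vF: "vanish_below F (fls_subdegree F)" by (rule vanish_below_subdeg)
  have "fls_nth (I (fls_cpoly c * F)) n
      = L (\<Sum>i=a..n-fls_subdegree F. [:fls_nth c i:] * fls_nth F (n - i))"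
    by (simp add: I_nth fls_times_nth_gen[OF vanish_below_cpoly[OF va] vF] fls_cpoly_nth)
  also have "\<dots> = (\<Sum>i=a..n-fls_subdegree F. fls_nth c i * fls_nth (I F) (n - i))"
    by (simp add: L_sum L_smult I_nth)
  also have "\<dots> = fls_nth (c * I F) n"
    by (simp add: fls_times_nth_gen[OF va vanish_below_I[OF vF]])
  finally show "fls_nth (I (fls_cpoly c * F)) n = fls_nth (c * I F) n" .
qed

lemma I_const_mult: "I (fls_const [:a:] * F) = fls_const a * I F"
  using I_cpoly_mult[of "fls_const a" F] by (simp add: fls_cpoly_const)

end

lemma inv_minus_u_eq: "inv_minus_u y = - inv_u_minus y"
  by (simp add: inv_minus_u_def inv_u_minus_def)

lemma fls_u_vanish: "vanish_below (fls_u :: 'b::comm_ring_1 poly fls) 0"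
  by (simp add: fls_u_def vanish_below_const)

lemma inv_u_minus_mult:
  fixes y :: "'a::field fls"
  assumes y: "fls_subdegree y < 0"
  shows "inv_u_minus y * (fls_u - fls_cpoly y) = 1"
proof -
  define d where "d = - fls_subdegree y"
  have d: "d \<ge> 1" using y by (simp add: d_def)
  have y0: "y \<noteq> 0" using y by auto
  define c where "c = fls_cpoly (inverse y)"
  define t where "t = (\<lambda>i::nat. fls_u ^ i * c ^ (i + 1))"
  define D where "D = fls_u - fls_cpoly y"
  have vc: "vanish_below c d"
    unfolding c_def by (rule vanish_below_cpoly) (simp add: vanish_below_def d_def)
  have vu: "vanish_below (fls_u ^ i :: 'a poly fls) 0" for i
    using vanish_below_power[OF fls_u_vanish, of i] by simp
  have vt: "vanish_below (t i) (int i + 1)" for i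
  proof -
    have "vanish_below (t i) (0 + int (i + 1) * d)"
      unfolding t_def by (rule vanish_below_mult[OF vu vanish_below_power[OF vc]]) (use d in simp)
    moreover have "int i \<le> d * int i" using mult_right_mono[of 1 d "int i"] d by simp
    ultimately show ?thesis using d by (elim vanish_below_mono) (simp add: algebra_simps)
  qed
  define s where "s = fls_series_lim t"
  have "t sums s" unfolding s_def by (rule fls_sums_vanish[OF vt])
  then have inv: "inv_u_minus y = - s"
    unfolding inv_u_minus_def t_def c_def by (simp add: sums_iff)
  have Yc: "fls_cpoly y * c = 1"
    unfolding c_def using y0 by (simp add: fls_cpoly_mult[symmetric])
  have tel: "D * (\<Sum>i<N. t i) = (fls_u * c) ^ N - 1" for N
  proof -
    have "D * t i = (fls_u * c) ^ Suc i - (fls_u * c) ^ i" for i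
    proof -
      have "D * t i = (fls_u * c) ^ Suc i - fls_u ^ i * c ^ i * (fls_cpoly y * c)"
        unfolding D_def t_def by (simp add: algebra_simps power_mult_distrib)
      then show ?thesis using Yc by (simp add: power_mult_distrib)
    qed
    then have "D * (\<Sum>i<N. t i) = (\<Sum>i<N. (fls_u * c) ^ Suc i - (fls_u * c) ^ i)"
      by (simp add: sum_distrib_left)
    also have "\<dots> = (fls_u * c) ^ N - 1"
      by (subst sum_lessThan_telescope) simp
    finally show ?thesis .
  qed
  have vD: "vanish_below D (- d)"
  proof -
    have "vanish_below (fls_u :: 'a poly fls) (- d)"
      by (rule vanish_below_mono[OF fls_u_vanish]) (use d in simp)
    moreover have "vanish_below (fls_cpoly y) (- d)"
      by (rule vanish_below_cpoly) (simp add: vanish_below_def d_def)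
    ultimately show ?thesis unfolding D_def vanish_below_def by simp
  qed
  have lim1: "(\<lambda>N. D * (\<Sum>i<N. t i)) \<longlonglongrightarrow> D * s"
  proof (rule fls_tendsto_vanish[where K=d])
    fix N
    have "vanish_below (D * ((\<Sum>i<N. t i) - s)) (- d + int N)"
      by (rule vanish_below_mult[OF vD]) (unfold s_def, rule fls_partial_vanish[OF vt])
    then show "vanish_below (D * (\<Sum>i<N. t i) - D * s) (int N - d)"
      by (simp add: algebra_simps)
  qed
  have lim2: "(\<lambda>N. D * (\<Sum>i<N. t i)) \<longlonglongrightarrow> -1"
  proof (rule fls_tendsto_vanish[where K=0])
    fix N
    have vuc: "vanish_below (fls_u * c) d"
      using vanish_below_mult[OF fls_u_vanish vc] by simp
    have "vanish_below ((fls_u * c) ^ N) (int N * d)"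
      by (rule vanish_below_power[OF vuc]) (use d in simp)
    then have "vanish_below ((fls_u * c) ^ N) (int N - 0)"
      by (rule vanish_below_mono) (use d in \<open>simp add: mult_le_cancel_left1\<close>)
    then show "vanish_below (D * (\<Sum>i<N. t i) - -1) (int N - 0)"
      by (simp add: tel)
  qed
  have "D * s = -1" using LIMSEQ_unique[OF lim1 lim2] .
  then show ?thesis unfolding inv D_def[symmetric] by (simp add: algebra_simps)
qed

section \<open>Embedding of polynomials over the Laurent field\<close>

definition emb :: "'a::field fls poly \<Rightarrow> 'a poly fls" where
  "emb g = poly (map_poly fls_cpoly g) fls_u"

lemma emb_pCons: "emb (pCons a p) = fls_cpoly a + fls_u * emb p"
  by (simp add: emb_def map_poly_pCons)

lemma emb_0[simp]: "emb 0 = 0"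
  by (simp add: emb_def)

lemma emb_add: "emb (p + q) = emb p + emb q"
proof -
  have "map_poly fls_cpoly (p + q) = map_poly fls_cpoly p + map_poly fls_cpoly q"
    by (rule poly_eqI) (simp add: coeff_map_poly fls_cpoly_add)
  then show ?thesis by (simp add: emb_def)
qed

lemma emb_smult: "emb (Polynomial.smult a p) = fls_cpoly a * emb p"
proof -
  have "map_poly fls_cpoly (Polynomial.smult a p) = Polynomial.smult (fls_cpoly a) (map_poly fls_cpoly p)"
    by (rule map_poly_smult) (simp_all add: fls_cpoly_mult)
  then show ?thesis by (simp add: emb_def)
qed

lemma emb_mult: "emb (p * q) = emb p * emb q"
proof (induction p)
  case 0 then show ?case by simp
next
  case (pCons a p)
  have "emb (pCons a p * q) = emb (Polynomial.smult a q + pCons 0 (p * q))" by simp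
  also have "\<dots> = fls_cpoly a * emb q + fls_u * (emb p * emb q)"
    by (simp add: emb_add emb_smult emb_pCons pCons.IH)
  also have "\<dots> = emb (pCons a p) * emb q"
    by (simp add: emb_pCons algebra_simps)
  finally show ?case .
qed

lemma emb_const: "emb [:a:] = fls_cpoly a"
  by (simp add: emb_pCons)

lemma emb_1[simp]: "emb 1 = 1"
  by (simp add: one_pCons emb_const)

lemma emb_linear: "emb [:- c, 1:] = fls_u - fls_cpoly c"
  by (simp add: emb_pCons fls_cpoly_uminus)

lemma emb_prod: "emb (\<Prod>i\<in>S. f i) = (\<Prod>i\<in>S. emb (f i))"
  by (induction S rule: infinite_finite_induct) (simp_all add: emb_mult)

lemma emb_sum: "emb (\<Sum>i\<in>S. f i) = (\<Sum>i\<in>S. emb (f i))"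
  by (induction S rule: infinite_finite_induct) (simp_all add: emb_add)

lemma fls_u_power: "fls_u ^ i = fls_const (monom 1 i)"
  by (simp add: fls_u_def fls_const_power monom_altdef)

lemma emb_monom: "emb (monom a i) = fls_cpoly a * fls_u ^ i"
  by (simp add: emb_def map_poly_monom poly_monom)

lemma fls_cpoly_eq_0_iff: "fls_cpoly x = 0 \<longleftrightarrow> x = 0"
proof
  assume "fls_cpoly x = 0"
  then have "fls_nth (fls_cpoly x) n = 0" for n by simp
  then show "x = 0" by (intro fls_eqI) (simp add: fls_cpoly_nth)
qed simp

lemma emb_expand:
  assumes "degree g < N"
  shows "emb g = (\<Sum>i<N. fls_cpoly (coeff g i) * fls_u ^ i)"
proof -
  have dm: "degree (map_poly fls_cpoly g) = degree g"
    by (rule degree_map_poly) (simp add: fls_cpoly_eq_0_iff)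
  have "emb g = (\<Sum>i\<le>degree g. fls_cpoly (coeff g i) * fls_u ^ i)"
    unfolding emb_def by (subst poly_altdef) (simp add: coeff_map_poly dm)
  also have "\<dots> = (\<Sum>i<N. fls_cpoly (coeff g i) * fls_u ^ i)"
    by (rule sum.mono_neutral_left) (use assms in \<open>auto simp: coeff_eq_0\<close>)
  finally show ?thesis .
qed

lemma emb_lift: "emb (map_poly fls_const f) = fls_const f"
proof (induction f)
  case 0 then show ?case by simp
next
  case (pCons a f)
  have "map_poly fls_const (pCons a f) = pCons (fls_const a) (map_poly fls_const f)"
    by (simp add: map_poly_pCons)
  then have "emb (map_poly fls_const (pCons a f)) = fls_const [:a:] + fls_u * fls_const f"
    by (simp add: emb_pCons pCons.IH fls_cpoly_const)
  also have "\<dots> = fls_const (pCons a f)"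
    by (simp add: fls_u_def fls_plus_const)
  finally show ?case .
qed

lemma mat_mult_mat_entry:
  "i < nr \<Longrightarrow> j < nc \<Longrightarrow> (mat nr q f * mat q nc g) $$ (i,j) = (\<Sum>a<q. f (i,a) * g (a,j))"
  by (simp add: scalar_prod_def atLeast0LessThan)

lemma sum_lessThan_add_split:
  "(\<Sum>a<m+(q::nat). f a) = (\<Sum>a<m. f a) + (\<Sum>i<q. f (m+i))"
  by (induction q) (simp_all add: add_ac)

lemma fls_const_sum: "fls_const (\<Sum>i\<in>S. f i) = (\<Sum>i\<in>S. fls_const (f i))"
  by (induction S rule: infinite_finite_induct) (simp_all add: fls_plus_const[symmetric])

lemma fls_const_prod: "fls_const (\<Prod>i\<in>S. f i) = (\<Prod>i\<in>S. fls_const (f i :: 'b::comm_ring_1))"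
  by (induction S rule: infinite_finite_induct) (simp_all flip: fls_const_mult_const)

lemma sum_delta_mult:
  assumes "finite S" "c \<in> S"
  shows "(\<Sum>a\<in>S. f a * (if a = c then 1 else 0)) = (f c :: 'b::semiring_1)"
proof -
  have "(\<Sum>a\<in>S. f a * (if a = c then 1 else 0)) = (\<Sum>a\<in>S. if a = c then f a else 0)"
    by (rule sum.cong) auto
  then show ?thesis using assms by simp
qed

lemma sum_delta_mult':
  assumes "finite S" "c \<in> S"
  shows "(\<Sum>a\<in>S. (if a = c then 1 else 0) * f a) = (f c :: 'b::semiring_1)"
proof -
  have "(\<Sum>a\<in>S. (if a = c then 1 else 0) * f a) = (\<Sum>a\<in>S. if a = c then f a else 0)"
    by (rule sum.cong) auto
  then show ?thesis using assms by simp
qed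

lemma monom_mult_smult: "monom (c::'b::comm_ring_1) n * M = Polynomial.smult c (monom 1 n * M)"
  by (subst mult_smult_left[symmetric]) (simp add: smult_monom)

lemma monom_const_mult: "monom (c::'b::comm_ring_1) j = [:c:] * monom 1 j"
  by (simp add: smult_monom)

lemma poly_sum_monoms_lt:
  assumes "degree f < N"
  shows "f = (\<Sum>j<N. monom (coeff f j) j)"
proof -
  have "f = (\<Sum>j\<le>N - 1. monom (coeff f j) j)"
    using assms by (intro poly_as_sum_of_monoms'[symmetric]) simp
  also have "{..N - 1} = {..<N}" using assms by auto
  finally show ?thesis .
qed

lemma poly_eval_lt:
  fixes f :: "'b::comm_ring_1 poly"
  assumes "degree f < N"
  shows "poly f z = (\<Sum>j<N. coeff f j * z ^ j)"
  by (subst poly_sum_monoms_lt[OF assms]) (simp add: poly_sum poly_monom)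

lemma mod_sum_left: "(\<Sum>i\<in>S. f i) mod (q::'b::field poly) = (\<Sum>i\<in>S. f i mod q)"
  by (induction S rule: infinite_finite_induct) (simp_all add: poly_mod_add_left)

locale hsetup = linfun L for L :: "'a::field_char_0 poly \<Rightarrow> 'a" +
  fixes p :: "nat \<Rightarrow> 'a poly" and \<omega> :: "nat \<Rightarrow> 'a" and k m n :: nat
    and x :: "nat \<Rightarrow> 'a" and y :: "nat \<Rightarrow> 'a fls"
  assumes p_monic: "\<And>j. lead_coeff (p j) = 1"
    and p_degree: "\<And>j. degree (p j) = j"
    and p_orth: "\<And>i j. L (p i * p j) = (if i = j then \<omega> j else 0)"
    and \<omega>_nonzero: "\<And>j. \<omega> j \<noteq> 0"
    and x_distinct: "inj_on x {1..m}"
    and y_distinct: "inj_on y {1..k}"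
    and y_large: "\<And>l. l \<in> {1..k} \<Longrightarrow> fls_subdegree (y l) < 0"
begin

definition "Ax = (\<Prod>l\<in>{1..m}. [:- x l, 1:])"
definition "W = (\<Prod>l\<in>{1..k}. inv_u_minus (y l))"
definition "Bp = (\<Prod>l\<in>{1..k}. [:- y l, 1:])"
definition "Bl l = (\<Prod>l'\<in>{1..k} - {l}. [:- y l', 1:])"
definition "rho g f = I (fls_const f * emb g * W)"
definition "ev r f = fls_const (poly f (x (r + 1)))"
definition "nn = max n k"
definition "P = m + n"
definition "DD = m + nn"
definition "extra g c = - coeff (g * monom 1 (k - n - 1 - c) mod Bp) (k - 1)"
definition "Zm G F = mat DD DD (\<lambda>(r, c). if c < P then (if r < m then ev r (F c) else rho (G (r - m)) (F c))
   else (if r < m then 0 else extra (G (r - m)) (c - P)))"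
definition "Tm F = mat DD DD (\<lambda>(a, c). if c < P then fls_const (coeff (F c) a) else (if a = c then 1 else 0))"
definition "Sm G = mat DD DD (\<lambda>(r, a). if r < m then (if a = r then 1 else 0)
   else (if a < m then 0 else coeff (G (r - m)) (a - m)))"

abbreviation "Xr \<equiv> (\<lambda>i. monom (1::'a fls) i)"
abbreviation "Xc \<equiv> (\<lambda>i. monom (1::'a) i)"

lemma DD_eq: "DD = P + (k - n)"
  by (simp add: DD_def P_def nn_def)

lemma rho_lin_row:
  assumes "degree g < nn"
  shows "rho g f = (\<Sum>i<nn. coeff g i * rho (Xr i) f)"
proof -
  have "rho g f = I (\<Sum>i<nn. fls_cpoly (coeff g i) * (fls_const f * fls_u ^ i * W))"
    unfolding rho_def emb_expand[OF assms]
    by (simp only: sum_distrib_left sum_distrib_right) (simp only: ac_simps)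
  also have "\<dots> = (\<Sum>i<nn. coeff g i * I (fls_const f * fls_u ^ i * W))"
    by (simp add: I_sum I_cpoly_mult)
  also have "\<dots> = (\<Sum>i<nn. coeff g i * rho (Xr i) f)"
    by (simp add: rho_def emb_monom)
  finally show ?thesis .
qed

lemma extra_lin_row:
  assumes "degree g < nn"
  shows "extra g c = (\<Sum>i<nn. coeff g i * extra (Xr i) c)"
proof -
  define M where "M = (monom 1 (k - n - 1 - c) :: 'a fls poly)"
  have "g * M = (\<Sum>i<nn. Polynomial.smult (coeff g i) (Xr i * M))"
    by (subst poly_sum_monoms_lt[OF assms]) (simp only: sum_distrib_right, rule sum.cong, simp, rule monom_mult_smult)
  then have "g * M mod Bp = (\<Sum>i<nn. Polynomial.smult (coeff g i) (Xr i * M mod Bp))"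
    by (simp add: mod_sum_left mod_smult_left)
  then show ?thesis
    unfolding extra_def M_def[symmetric] by (simp add: coeff_sum sum_negf)
qed

lemma rho_lin_col:
  assumes "degree f < N"
  shows "rho g f = (\<Sum>j<N. fls_const (coeff f j) * rho g (Xc j))"
proof -
  have "fls_const f = fls_const (\<Sum>j<N. [:coeff f j:] * Xc j)"
    by (subst poly_sum_monoms_lt[OF assms]) (simp only: monom_const_mult[symmetric])
  also have "\<dots> = (\<Sum>j<N. fls_const [:coeff f j:] * fls_const (Xc j))"
    by (simp only: fls_const_sum fls_const_mult_const)
  finally have "rho g f = I ((\<Sum>j<N. fls_const [:coeff f j:] * fls_const (Xc j)) * emb g * W)"
    unfolding rho_def by simp
  also have "\<dots> = I (\<Sum>j<N. fls_const [:coeff f j:] * (fls_const (Xc j) * emb g * W))"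
    by (simp only: sum_distrib_right mult.assoc)
  also have "\<dots> = (\<Sum>j<N. fls_const (coeff f j) * rho g (Xc j))"
    by (simp add: I_sum I_const_mult rho_def)
  finally show ?thesis .
qed

lemma ev_lin_col:
  assumes "degree f < N"
  shows "ev r f = (\<Sum>j<N. fls_const (coeff f j) * ev r (Xc j))"
  unfolding ev_def by (simp add: poly_eval_lt[OF assms] fls_const_sum poly_monom)

lemma Zm_carrier: "Zm G F \<in> carrier_mat DD DD"
  by (simp add: Zm_def)

lemma Tm_carrier: "Tm F \<in> carrier_mat DD DD"
  by (simp add: Tm_def)

lemma Sm_carrier: "Sm G \<in> carrier_mat DD DD"
  by (simp add: Sm_def)

lemma col_change:
  assumes deg: "\<And>c. c < P \<Longrightarrow> degree (F c) < P"
  shows "Zm G Xc * Tm F = Zm G F"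
proof (rule eq_matI)
  fix r c assume r: "r < dim_row (Zm G F)" and c: "c < dim_col (Zm G F)"
  then have r: "r < DD" and c: "c < DD" by (simp_all add: Zm_def)
  define ZX where "ZX = (\<lambda>(r, c). if c < P then (if r < m then ev r (Xc c) else rho (G (r - m)) (Xc c))
   else (if r < m then 0 else extra (G (r - m)) (c - P)))"
  have "(Zm G Xc * Tm F) $$ (r, c) = (\<Sum>a<DD. ZX (r, a) *
      (if c < P then fls_const (coeff (F c) a) else (if a = c then 1 else 0)))"
    unfolding Zm_def Tm_def ZX_def using r c by (subst mat_mult_mat_entry) auto
  also have "\<dots> = Zm G F $$ (r, c)"
  proof (cases "c < P")
    case True
    have "(\<Sum>a<DD. ZX (r, a) * fls_const (coeff (F c) a)) = (\<Sum>a<P. ZX (r, a) * fls_const (coeff (F c) a))"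
    proof (rule sum.mono_neutral_right)
      show "\<forall>a\<in>{..<DD} - {..<P}. ZX (r, a) * fls_const (coeff (F c) a) = 0"
        using deg[OF True] by (auto simp: coeff_eq_0)
    qed (auto simp: DD_eq)
    also have "\<dots> = Zm G F $$ (r, c)"
      using r c True unfolding Zm_def ZX_def
      by (auto simp: rho_lin_col[OF deg[OF True]] ev_lin_col[OF deg[OF True]] mult.commute)
    finally show ?thesis using True by simp
  next
    case False
    have "(\<Sum>a<DD. ZX (r, a) * (if a = c then 1 else 0)) = ZX (r, c)"
      using c by (intro sum_delta_mult) auto
    then show ?thesis using False r c by (simp add: Zm_def ZX_def)
  qed
  finally show "(Zm G Xc * Tm F) $$ (r, c) = Zm G F $$ (r, c)" .
qed (simp_all add: Zm_def Tm_def)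

lemma row_change:
  assumes deg: "\<And>a. a < nn \<Longrightarrow> degree (G a) < nn"
  shows "Sm G * Zm Xr F = Zm G F"
proof (rule eq_matI)
  fix r c assume r: "r < dim_row (Zm G F)" and c: "c < dim_col (Zm G F)"
  then have r: "r < DD" and c: "c < DD" by (simp_all add: Zm_def)
  define ZX where "ZX = (\<lambda>(r, c). if c < P then (if r < m then ev r (F c) else rho (Xr (r - m)) (F c))
   else (if r < m then 0 else extra (Xr (r - m)) (c - P)))"
  define SG where "SG = (\<lambda>(r, a). if r < m then (if a = r then 1 else 0)
   else (if a < m then 0 else coeff (G (r - m)) (a - m)))"
  have "(Sm G * Zm Xr F) $$ (r, c) = (\<Sum>a<DD. SG (r, a) * ZX (a, c))"
    unfolding Zm_def Sm_def ZX_def SG_def using r c by (subst mat_mult_mat_entry) auto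
  also have "\<dots> = Zm G F $$ (r, c)"
  proof (cases "r < m")
    case True
    have "(\<Sum>a<DD. SG (r, a) * ZX (a, c)) = ZX (r, c)"
      using True r unfolding SG_def by (simp add: sum_delta_mult')
    then show ?thesis using True r c by (simp add: Zm_def ZX_def)
  next
    case False
    have "(\<Sum>a<DD. SG (r, a) * ZX (a, c)) = (\<Sum>i<nn. coeff (G (r - m)) i * ZX (m + i, c))"
      unfolding DD_def sum_lessThan_add_split using False by (simp add: SG_def)
    also have "\<dots> = Zm G F $$ (r, c)"
    proof -
      have rm: "r - m < nn" using r False by (simp add: DD_def)
      show ?thesis using False r c unfolding ZX_def Zm_def
        by (auto simp: rho_lin_row[OF deg[OF rm]] extra_lin_row[OF deg[OF rm]])
    qed
    finally show ?thesis .
  qed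
  finally show "(Sm G * Zm Xr F) $$ (r, c) = Zm G F $$ (r, c)" .
qed (simp_all add: Zm_def Sm_def)

end

lemma prod_linear_degree:
  fixes c :: "'i \<Rightarrow> 'b::idom"
  assumes "finite S"
  shows "degree (\<Prod>l\<in>S. [:- c l, 1:]) = card S"
  using assms by (subst degree_prod_sum_eq) auto

lemma prod_linear_lead:
  fixes c :: "'i \<Rightarrow> 'b::idom"
  shows "lead_coeff (\<Prod>l\<in>S. [:- c l, 1:]) = 1"
  by (simp add: lead_coeff_prod)

context hsetup
begin

lemma deg_Bp: "degree Bp = k"
  unfolding Bp_def by (simp add: prod_linear_degree)

lemma lead_Bp: "lead_coeff Bp = 1"
  unfolding Bp_def by (rule prod_linear_lead)

lemma deg_Bl: "l \<in> {1..k} \<Longrightarrow> degree (Bl l) = k - 1"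
  unfolding Bl_def by (simp add: prod_linear_degree)

lemma lead_Bl: "lead_coeff (Bl l) = 1"
  unfolding Bl_def by (rule prod_linear_lead)

lemma deg_Ax: "degree Ax = m"
  unfolding Ax_def by (simp add: prod_linear_degree)

lemma lead_Ax: "lead_coeff Ax = 1"
  unfolding Ax_def by (rule prod_linear_lead)

lemma Bp_nz: "Bp \<noteq> 0" using lead_Bp by auto

lemma inv_y: "l \<in> {1..k} \<Longrightarrow> inv_u_minus (y l) * (fls_u - fls_cpoly (y l)) = 1"
  by (rule inv_u_minus_mult[OF y_large])

lemma emb_Bp: "emb Bp = (\<Prod>l\<in>{1..k}. fls_u - fls_cpoly (y l))"
  unfolding Bp_def by (simp add: emb_prod emb_linear)

lemma W_Bp: "emb Bp * W = 1"
proof -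
  have "emb Bp * W = (\<Prod>l\<in>{1..k}. inv_u_minus (y l) * (fls_u - fls_cpoly (y l)))"
    unfolding emb_Bp W_def by (simp add: prod.distrib mult.commute)
  also have "\<dots> = 1" using inv_y by (simp add: prod.neutral)
  finally show ?thesis .
qed

lemma W_Bl:
  assumes l: "l \<in> {1..k}"
  shows "emb (Bl l) * W = inv_u_minus (y l)"
proof -
  have W: "W = inv_u_minus (y l) * (\<Prod>l'\<in>{1..k} - {l}. inv_u_minus (y l'))"
    unfolding W_def using l by (simp add: prod.remove)
  have "emb (Bl l) * W = inv_u_minus (y l) *
      (\<Prod>l'\<in>{1..k} - {l}. inv_u_minus (y l') * (fls_u - fls_cpoly (y l')))"
    unfolding W Bl_def by (simp add: emb_prod emb_linear prod.distrib ac_simps)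
  also have "\<dots> = inv_u_minus (y l)" using inv_y by (simp add: prod.neutral)
  finally show ?thesis .
qed

lemma rho_Bp: "rho (Bp * map_poly fls_const f) g = fls_const (L (g * f))"
proof -
  have "rho (Bp * map_poly fls_const f) g = I (fls_const g * fls_const f * (emb Bp * W))"
    unfolding rho_def emb_mult emb_lift by (simp only: fls_const_mult_const[symmetric] ac_simps)
  also have "\<dots> = fls_const (L (g * f))"
    by (simp add: W_Bp I_const)
  finally show ?thesis .
qed

lemma rho_Bl: "l \<in> {1..k} \<Longrightarrow> rho (Bl l) g = I (fls_const g * inv_u_minus (y l))"
  unfolding rho_def by (simp add: mult.assoc W_Bl)

lemma q_fun_eq: "q_fun L p s yy = - I (fls_const (p s) * inv_u_minus yy)"
  unfolding q_fun_def inv_minus_u_eq by (simp add: I_uminus)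

lemma rho_X: "rho (Xr i) (Ax * Xc j) = mod_moment L m x k y (i + j)"
proof -
  have e: "emb (Xr i) = fls_const (Xc i)" by (simp add: emb_monom fls_u_power)
  have xx: "Xc j * Xc i = monom 1 (i + j)" by (simp add: mult_monom add.commute)
  have "Ax * Xc j * Xc i = Ax * (Xc j * Xc i)" by (rule mult.assoc)
  also have "\<dots> = Ax * monom 1 (i + j)" by (simp only: xx)
  also have "\<dots> = monom 1 (i + j) * Ax" by (rule mult.commute)
  finally have pe: "Ax * Xc j * Xc i = monom 1 (i + j) * Ax" .
  have "rho (Xr i) (Ax * Xc j) = I (fls_const (Ax * Xc j * Xc i) * W)"
    unfolding rho_def e by simp
  then have "rho (Xr i) (Ax * Xc j) = I (fls_const (monom 1 (i + j) * Ax) * W)"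
    by (simp only: pe)
  then show ?thesis unfolding mod_moment_def Ax_def W_def by simp
qed

lemma det_Tm:
  assumes F: "\<And>c. c < P \<Longrightarrow> degree (F c) = c \<and> lead_coeff (F c) = 1"
  shows "det (Tm F) = 1"
proof -
  have ut: "upper_triangular (Tm F)"
    unfolding upper_triangular_def Tm_def
    using F by (auto simp: coeff_eq_0)
  have "det (Tm F) = prod_list (diag_mat (Tm F))"
    by (rule det_upper_triangular[OF ut Tm_carrier])
  also have "\<dots> = 1"
    unfolding prod_list_diag_prod
  proof (rule prod.neutral, intro ballI)
    fix c assume "c \<in> {0..<dim_row (Tm F)}"
    then have c: "c < DD" by (simp add: Tm_def)
    show "Tm F $$ (c, c) = 1"
    proof (cases "c < P")
      case True
      then have "coeff (F c) c = 1" using F[OF True] by metis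
      then show ?thesis using True c by (simp add: Tm_def)
    qed (use c in \<open>simp add: Tm_def\<close>)
  qed
  finally show ?thesis .
qed

end

lemma det_split:
  fixes A :: "'b::idom mat"
  assumes A: "A \<in> carrier_mat (a + b) (a + b)"
    and z: "\<And>i j. i < a \<Longrightarrow> a \<le> j \<Longrightarrow> j < a + b \<Longrightarrow> A $$ (i, j) = 0"
  shows "det A = det (mat a a (\<lambda>(i, j). A $$ (i, j))) * det (mat b b (\<lambda>(i, j). A $$ (a + i, a + j)))"
proof -
  let ?UL = "mat a a (\<lambda>(i, j). A $$ (i, j))"
  let ?LL = "mat b a (\<lambda>(i, j). A $$ (a + i, j))"
  let ?LR = "mat b b (\<lambda>(i, j). A $$ (a + i, a + j))"
  have eq: "A = four_block_mat ?UL (0\<^sub>m a b) ?LL ?LR"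
  proof (rule eq_matI)
    fix i j assume i: "i < dim_row (four_block_mat ?UL (0\<^sub>m a b) ?LL ?LR)"
      and j: "j < dim_col (four_block_mat ?UL (0\<^sub>m a b) ?LL ?LR)"
    then have i': "i < a + b" and j': "j < a + b" by simp_all
    show "A $$ (i, j) = four_block_mat ?UL (0\<^sub>m a b) ?LL ?LR $$ (i, j)"
      using i' j' z[of i j] by (auto simp: not_less)
  qed (use A in auto)
  have "det A = det (four_block_mat ?UL (0\<^sub>m a b) ?LL ?LR)" using eq by simp
  also have "\<dots> = det ?UL * det ?LR"
    by (rule det_four_block_mat_upper_right_zero) auto
  finally show ?thesis .
qed

lemma det_lower_tri_mat:
  assumes "\<And>i j. i < j \<Longrightarrow> j < N \<Longrightarrow> f (i, j) = 0"
  shows "det (mat N N f) = (\<Prod>i<N. f (i, i))"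
proof -
  have "det (mat N N f) = prod_list (diag_mat (mat N N f))"
    by (rule det_lower_triangular[of N]) (use assms in auto)
  then show ?thesis by (simp add: prod_list_diag_prod atLeast0LessThan)
qed

lemma det_upper_tri_mat:
  assumes "\<And>i j. j < i \<Longrightarrow> i < N \<Longrightarrow> f (i, j) = 0"
  shows "det (mat N N f) = (\<Prod>i<N. f (i, i))"
proof -
  have "det (mat N N f) = prod_list (diag_mat (mat N N f))"
    by (rule det_upper_triangular[of _ N]) (use assms in \<open>auto simp: upper_triangular_def\<close>)
  then show ?thesis by (simp add: prod_list_diag_prod atLeast0LessThan)
qed

lemma det_lower_tri_mat':
  assumes "\<And>i j. i < j \<Longrightarrow> j < N \<Longrightarrow> g i j = 0"
  shows "det (mat N N (\<lambda>(i, j). g i j)) = (\<Prod>i<N. g i i)"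
  using det_lower_tri_mat[of N "\<lambda>(i, j). g i j"] assms by simp

lemma det_upper_tri_mat':
  assumes "\<And>i j. j < i \<Longrightarrow> i < N \<Longrightarrow> g i j = 0"
  shows "det (mat N N (\<lambda>(i, j). g i j)) = (\<Prod>i<N. g i i)"
  using det_upper_tri_mat[of N "\<lambda>(i, j). g i j"] assms by simp

context hsetup
begin

definition "Nx c = (\<Prod>r<c. [:- x (r + 1), 1:])"
definition "B3 c = (if c < m then Nx c else Ax * Xc (c - m))"
definition "Gfin a = (if a < k then Bl (a + 1) else Bp * map_poly fls_const (p (a - k)))"

lemma B3_deg: "c < P \<Longrightarrow> degree (B3 c) = c \<and> lead_coeff (B3 c) = 1"
proof (cases "c < m")
  case True
  then show ?thesis unfolding B3_def Nx_def
    using prod_linear_degree[of "{..<c}" "\<lambda>r. x (r + 1)"] prod_linear_lead[of "\<lambda>r. x (r + 1)" "{..<c}"]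
    by simp
next
  case False
  assume "c < P"
  have Ax0: "Ax \<noteq> 0" using lead_Ax by auto
  have "degree (Ax * Xc (c - m)) = m + (c - m)"
    using Ax0 by (simp add: degree_mult_eq deg_Ax degree_monom_eq)
  moreover have "lead_coeff (Ax * Xc (c - m)) = 1"
    by (simp add: lead_coeff_mult lead_Ax degree_monom_eq)
  ultimately show ?thesis using False unfolding B3_def by simp
qed

lemma p_deg_P: "c < P \<Longrightarrow> degree (p c) = c \<and> lead_coeff (p c) = 1"
  using p_degree p_monic by simp

lemma degree_lift: "degree (map_poly fls_const f) = degree f"
  by (rule degree_map_poly) simp

lemma lead_lift: "lead_coeff (map_poly fls_const f) = fls_const (lead_coeff f)"
  by (simp add: degree_lift coeff_map_poly)

lemma p_nz: "p j \<noteq> 0"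
  using p_monic[of j] by auto

lemma Gfin_deg: "a < nn \<Longrightarrow> degree (Gfin a) < nn"
proof (cases "a < k")
  case True
  then show ?thesis using deg_Bl[of "a + 1"] by (simp add: Gfin_def nn_def)
next
  case False
  assume a: "a < nn"
  have "degree (Bp * map_poly fls_const (p (a - k))) = k + (a - k)"
    using Bp_nz p_nz by (subst degree_mult_eq) (auto simp: deg_Bp degree_lift p_degree
        map_poly_eq_0_iff)
  then show ?thesis using False a by (simp add: Gfin_def)
qed

lemma poly_Nx: "poly (Nx c) z = (\<Prod>r<c. z - x (r + 1))"
  by (simp add: Nx_def poly_prod)

lemma poly_Ax: "r < m \<Longrightarrow> poly Ax (x (Suc r)) = 0"
  unfolding Ax_def poly_prod by (rule prod_zero) (auto intro!: bexI[of _ "Suc r"])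

lemma poly_Nx_zero: "i < c \<Longrightarrow> poly (Nx c) (x (Suc i)) = 0"
  unfolding poly_Nx by (rule prod_zero) (auto intro!: bexI[of _ i])


lemma extra_X:
  assumes "i + (k - n - 1 - c) < k"
  shows "extra (Xr i) c = (if i + (k - n - 1 - c) = k - 1 then -1 else 0)"
proof -
  have "Xr i * monom 1 (k - n - 1 - c) = monom 1 (i + (k - n - 1 - c))"
    by (simp add: mult_monom)
  moreover have "monom (1::'a fls) (i + (k - n - 1 - c)) mod Bp = monom 1 (i + (k - n - 1 - c))"
    by (rule mod_poly_less) (use assms in \<open>simp add: deg_Bp degree_monom_eq\<close>)
  ultimately show ?thesis unfolding extra_def by (simp add: coeff_monom)
qed

definition "Hx = (\<Prod>r<m. \<Prod>r'<r. x (r + 1) - x (r' + 1))"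

lemma det_Z3:
  "det (Zm Xr B3) = fls_const Hx * det (mat n n (\<lambda>(i, j). mod_moment L m x k y (i + j))) * (- 1) ^ (k - n)"
proof -
  let ?Z = "Zm Xr B3"
  have car: "?Z \<in> carrier_mat (m + nn) (m + nn)" using Zm_carrier by (simp add: DD_def)
  have "det ?Z = det (mat m m (\<lambda>(i, j). ?Z $$ (i, j))) * det (mat nn nn (\<lambda>(i, j). ?Z $$ (m + i, m + j)))"
  proof (rule det_split[OF car])
    fix i j assume "i < m" "m \<le> j" "j < m + nn"
    then show "?Z $$ (i, j) = 0"
      by (auto simp: Zm_def DD_def B3_def ev_def poly_Ax)
  qed
  also have "det (mat m m (\<lambda>(i, j). ?Z $$ (i, j))) = fls_const Hx"
  proof -
    have "det (mat m m (\<lambda>(i, j). ?Z $$ (i, j))) = (\<Prod>i<m. ?Z $$ (i, i))"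
    proof (rule det_lower_tri_mat')
      fix i j assume "i < j" "j < m"
      then show "?Z $$ (i, j) = 0"
        by (simp add: Zm_def DD_def P_def B3_def ev_def poly_Nx_zero)
    qed
    also have "\<dots> = fls_const Hx"
      by (simp add: Hx_def Zm_def DD_def P_def B3_def ev_def poly_Nx fls_const_prod)
    finally show ?thesis .
  qed
  also have "det (mat nn nn (\<lambda>(i, j). ?Z $$ (m + i, m + j))) =
     det (mat n n (\<lambda>(i, j). mod_moment L m x k y (i + j))) * (- 1) ^ (k - n)"
  proof -
    let ?Q = "mat nn nn (\<lambda>(i, j). ?Z $$ (m + i, m + j))"
    have nn_eq: "n + (k - n) = nn" by (simp add: nn_def)
    have carQ: "?Q \<in> carrier_mat (n + (k - n)) (n + (k - n))" unfolding nn_eq by simp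
    have "det ?Q = det (mat n n (\<lambda>(i, j). ?Q $$ (i, j))) * det (mat (k - n) (k - n) (\<lambda>(i, j). ?Q $$ (n + i, n + j)))"
    proof (rule det_split[OF carQ])
      fix i j assume ij: "i < n" "n \<le> j" "j < n + (k - n)"
      then have "extra (Xr i) (m + j - P) = 0"
        by (subst extra_X) (auto simp: P_def)
      then show "?Q $$ (i, j) = 0" using ij by (simp add: Zm_def DD_def nn_def P_def)
    qed
    also have "mat n n (\<lambda>(i, j). ?Q $$ (i, j)) = mat n n (\<lambda>(i, j). mod_moment L m x k y (i + j))"
      by (rule eq_matI) (auto simp: Zm_def DD_def nn_def P_def B3_def rho_X)
    also have "det (mat (k - n) (k - n) (\<lambda>(i, j). ?Q $$ (n + i, n + j))) = (- 1) ^ (k - n)"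
    proof -
      have "det (mat (k - n) (k - n) (\<lambda>(i, j). ?Q $$ (n + i, n + j))) = (\<Prod>i<k - n. ?Q $$ (n + i, n + i))"
      proof (rule det_lower_tri_mat')
        fix i j assume ij: "i < j" "j < k - n"
        then have "extra (Xr (n + i)) (m + (n + j) - P) = 0"
          by (subst extra_X) (auto simp: P_def)
        then show "?Q $$ (n + i, n + j) = 0"
          using ij by (simp add: Zm_def DD_def nn_def P_def)
      qed
      also have "\<dots> = (\<Prod>i<k - n. - 1)"
      proof (rule prod.cong)
        fix i assume "i \<in> {..<k - n}"
        then have i: "i < k - n" by simp
        then have "extra (Xr (n + i)) (m + (n + i) - P) = - 1"
          by (subst extra_X) (auto simp: P_def)
        then show "?Q $$ (n + i, n + i) = - 1" using i by (simp add: Zm_def DD_def nn_def P_def)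
      qed simp
      finally show ?thesis by simp
    qed
    finally show ?thesis .
  qed
  finally show ?thesis by (simp add: mult.assoc)
qed

end

lemma prod_shift1: "(\<Prod>j\<in>{1..N}. f j) = (\<Prod>a<N. f (Suc a))"
  by (simp add: prod.atLeast1_atMost_eq)

lemma vprod_shift:
  "(\<Prod>j\<in>{1..N}. \<Prod>i\<in>{1..<j}. g i j) = (\<Prod>a<N. \<Prod>l<a. g (Suc l) (Suc a))"
proof -
  have "(\<Prod>j\<in>{1..N}. \<Prod>i\<in>{1..<j}. g i j) = (\<Prod>a<N. \<Prod>i\<in>{1..<Suc a}. g i (Suc a))"
    by (rule prod_shift1)
  also have "\<dots> = (\<Prod>a<N. \<Prod>l<a. g (Suc l) (Suc a))"
  proof (rule prod.cong)
    fix a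
    have "{1..<Suc a} = Suc ` {..<a}" by (simp add: image_Suc_lessThan atLeastLessThanSuc_atLeastAtMost)
    then show "(\<Prod>i\<in>{1..<Suc a}. g i (Suc a)) = (\<Prod>l<a. g (Suc l) (Suc a))"
      by (simp add: prod.reindex)
  qed simp
  finally show ?thesis .
qed

lemma vprod_swap:
  "(\<Prod>j\<in>{1..N}. \<Prod>l\<in>{j<..N}. g j l) = (\<Prod>l\<in>{1..N}. \<Prod>j\<in>{1..<l}. g j (l::nat))"
proof -
  have "(\<Prod>j\<in>{1..N}. \<Prod>l\<in>{l. l \<in> {1..N} \<and> j < l}. g j l) =
        (\<Prod>l\<in>{1..N}. \<Prod>j\<in>{j. j \<in> {1..N} \<and> j < l}. g j l)"
    by (rule prod.swap_restrict) auto
  moreover have "(\<Prod>j\<in>{1..N}. \<Prod>l\<in>{l. l \<in> {1..N} \<and> j < l}. g j l) = (\<Prod>j\<in>{1..N}. \<Prod>l\<in>{j<..N}. g j l)"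
    by (rule prod.cong) (auto intro!: prod.cong)
  moreover have "(\<Prod>l\<in>{1..N}. \<Prod>j\<in>{j. j \<in> {1..N} \<and> j < l}. g j l) = (\<Prod>l\<in>{1..N}. \<Prod>j\<in>{1..<l}. g j l)"
    by (rule prod.cong) (auto intro!: prod.cong)
  ultimately show ?thesis by simp
qed

lemma coeff_poly_mult_mat:
  fixes F :: "nat \<Rightarrow> 'b::comm_ring_1 poly"
  assumes "\<And>a. a < N \<Longrightarrow> degree (F a) < N"
  shows "mat N N (\<lambda>(a, i). coeff (F a) i) * mat N N (\<lambda>(i, s). z s ^ i) = mat N N (\<lambda>(a, s). poly (F a) (z s))"
  by (rule eq_matI) (auto simp: scalar_prod_def atLeast0LessThan poly_eval_lt[OF assms])

context hsetup
begin

lemma det_Sm: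
  fixes G :: "nat \<Rightarrow> 'a fls poly"
  shows "det (Sm G) = det (mat nn nn (\<lambda>(i, j). coeff (G i) j))"
proof -
  have car: "Sm G \<in> carrier_mat (m + nn) (m + nn)" using Sm_carrier by (simp add: DD_def)
  have "det (Sm G) = det (mat m m (\<lambda>(i, j). Sm G $$ (i, j))) * det (mat nn nn (\<lambda>(i, j). Sm G $$ (m + i, m + j)))"
    by (rule det_split[OF car]) (auto simp: Sm_def DD_def)
  also have "det (mat m m (\<lambda>(i, j). Sm G $$ (i, j))) = 1"
    by (subst det_lower_tri_mat') (auto simp: Sm_def DD_def)
  also have "mat nn nn (\<lambda>(i, j). Sm G $$ (m + i, m + j)) = mat nn nn (\<lambda>(i, j). coeff (G i) j)"
    by (rule eq_matI) (auto simp: Sm_def DD_def)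
  finally show ?thesis by simp
qed

definition "Sk = mat k k (\<lambda>(i, j). coeff (Bl (i + 1)) j)"

lemma det_Sm_Gfin: "det (Sm Gfin) = det Sk"
proof -
  let ?S = "mat nn nn (\<lambda>(i, j). coeff (Gfin i) j)"
  have nn_eq: "k + (n - k) = nn" by (simp add: nn_def)
  have car: "?S \<in> carrier_mat (k + (n - k)) (k + (n - k))" unfolding nn_eq by simp
  have "det ?S = det (mat k k (\<lambda>(i, j). ?S $$ (i, j))) * det (mat (n - k) (n - k) (\<lambda>(i, j). ?S $$ (k + i, k + j)))"
  proof (rule det_split[OF car])
    fix i j assume ij: "i < k" "k \<le> j" "j < k + (n - k)"
    then have "coeff (Bl (i + 1)) j = 0" using deg_Bl[of "i+1"] by (intro coeff_eq_0) auto
    then show "?S $$ (i, j) = 0" using ij by (simp add: Gfin_def nn_def)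
  qed
  also have "mat k k (\<lambda>(i, j). ?S $$ (i, j)) = Sk"
    by (rule eq_matI) (auto simp: Sk_def Gfin_def nn_def)
  also have "det (mat (n - k) (n - k) (\<lambda>(i, j). ?S $$ (k + i, k + j))) = 1"
  proof -
    have dg: "degree (Bp * map_poly fls_const (p i)) = k + i" for i
      using Bp_nz p_nz by (subst degree_mult_eq) (auto simp: deg_Bp degree_lift p_degree map_poly_eq_0_iff)
    have ld: "lead_coeff (Bp * map_poly fls_const (p i)) = 1" for i
      by (simp add: lead_coeff_mult lead_Bp lead_lift p_monic)
    have "det (mat (n - k) (n - k) (\<lambda>(i, j). ?S $$ (k + i, k + j))) = (\<Prod>i<n - k. ?S $$ (k + i, k + i))"
    proof (rule det_lower_tri_mat')
      fix i j assume ij: "i < j" "j < n - k"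
      then show "?S $$ (k + i, k + j) = 0"
        using dg[of i] by (simp add: Gfin_def nn_def coeff_eq_0)
    qed
    also have "\<dots> = 1"
    proof (rule prod.neutral, intro ballI)
      fix i assume "i \<in> {..<n - k}"
      then show "?S $$ (k + i, k + i) = 1"
        using dg[of i] ld[of i] by (simp add: Gfin_def nn_def)
    qed
    finally show ?thesis .
  qed
  finally show ?thesis by (simp add: det_Sm)
qed

definition "Ny a = (\<Prod>l<a. [:- y (l + 1), 1:])"
definition "Vy = mat k k (\<lambda>(i, s). y (s + 1) ^ i)"
definition "Vd = (\<Prod>a<k. \<Prod>l<a. y (a + 1) - y (l + 1))"
definition "Dy = (\<Prod>j\<in>{1..k}. \<Prod>i\<in>{1..<j}. y i - y j)"

lemma y_ne: "i \<in> {1..k} \<Longrightarrow> j \<in> {1..k} \<Longrightarrow> i \<noteq> j \<Longrightarrow> y i \<noteq> y j"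
  using inj_onD[OF y_distinct] by blast

lemma det_Vy: "det Vy = Vd"
proof -
  let ?N = "mat k k (\<lambda>(a, i). coeff (Ny a) i)"
  have degNy: "degree (Ny a) = a" and leadNy: "lead_coeff (Ny a) = 1" for a
    unfolding Ny_def
    using prod_linear_degree[of "{..<a}" "\<lambda>l. y (l + 1)"] prod_linear_lead[of "\<lambda>l. y (l + 1)" "{..<a}"]
    by simp_all
  have "det ?N = 1"
  proof -
    have "det ?N = (\<Prod>a<k. coeff (Ny a) a)"
      by (rule det_lower_tri_mat') (simp add: coeff_eq_0 degNy)
    also have "\<dots> = 1"
    proof (rule prod.neutral, intro ballI)
      fix a show "coeff (Ny a) a = 1" using leadNy[of a] degNy[of a] by simp
    qed
    finally show ?thesis .
  qed
  have "?N * Vy = mat k k (\<lambda>(a, s). poly (Ny a) (y (s + 1)))"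
    unfolding Vy_def by (rule coeff_poly_mult_mat) (simp add: degNy)
  moreover have "det (?N * Vy) = det ?N * det Vy"
    by (rule det_mult) (auto simp: Vy_def)
  ultimately have "det ?N * det Vy = det (mat k k (\<lambda>(a, s). poly (Ny a) (y (s + 1))))"
    by simp
  also have "\<dots> = (\<Prod>a<k. poly (Ny a) (y (a + 1)))"
  proof (rule det_upper_tri_mat')
    fix a s assume "s < a" "a < k"
    then show "poly (Ny a) (y (s + 1)) = 0"
      unfolding Ny_def poly_prod by (intro prod_zero) (auto intro!: bexI[of _ s])
  qed
  also have "\<dots> = Vd" by (simp add: Vd_def Ny_def poly_prod)
  finally show ?thesis using \<open>det ?N = 1\<close> by simp
qed

lemma Vd_nz: "Vd \<noteq> 0"
proof -
  have "y (a + 1) - y (l + 1) \<noteq> 0" if "a < k" "l < a" for a l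
    using y_ne[of "a + 1" "l + 1"] that by simp
  then show ?thesis unfolding Vd_def by (simp add: prod_zero_iff)
qed

lemma det_Sk: "det Sk = Dy"
proof -
  have "Sk * Vy = mat k k (\<lambda>(a, s). poly (Bl (a + 1)) (y (s + 1)))"
    unfolding Sk_def Vy_def by (rule coeff_poly_mult_mat) (use deg_Bl in auto)
  moreover have "det (Sk * Vy) = det Sk * det Vy"
    by (rule det_mult) (auto simp: Vy_def Sk_def)
  ultimately have "det Sk * Vd = det (mat k k (\<lambda>(a, s). poly (Bl (a + 1)) (y (s + 1))))"
    by (simp add: det_Vy)
  also have "\<dots> = (\<Prod>a<k. poly (Bl (a + 1)) (y (a + 1)))"
  proof (rule det_upper_tri_mat')
    fix a s assume "s < a" "a < k"
    then show "poly (Bl (a + 1)) (y (s + 1)) = 0"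
      unfolding Bl_def poly_prod by (intro prod_zero) (auto intro!: bexI[of _ "s + 1"])
  qed
  also have "\<dots> = (\<Prod>j\<in>{1..k}. \<Prod>l\<in>{1..k} - {j}. y j - y l)"
    by (subst prod_shift1) (simp add: Bl_def poly_prod)
  also have "\<dots> = (\<Prod>j\<in>{1..k}. (\<Prod>l\<in>{1..<j}. y j - y l) * (\<Prod>l\<in>{j<..k}. y j - y l))"
  proof (rule prod.cong)
    fix j assume j: "j \<in> {1..k}"
    have e: "{1..k} - {j} = {1..<j} \<union> {j<..k}" using j by auto
    have "(\<Prod>l\<in>{1..k} - {j}. y j - y l) = (\<Prod>l\<in>{1..<j} \<union> {j<..k}. y j - y l)"
      by (simp only: e)
    also have "\<dots> = (\<Prod>l\<in>{1..<j}. y j - y l) * (\<Prod>l\<in>{j<..k}. y j - y l)"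
      by (rule prod.union_disjoint) auto
    finally show "(\<Prod>l\<in>{1..k} - {j}. y j - y l) = (\<Prod>l\<in>{1..<j}. y j - y l) * (\<Prod>l\<in>{j<..k}. y j - y l)" .
  qed simp
  also have "\<dots> = Vd * Dy"
    unfolding prod.distrib vprod_swap Dy_def Vd_def vprod_shift by simp
  finally show ?thesis using Vd_nz by simp
qed

definition "Hxx = (\<Prod>j\<in>{1..m}. \<Prod>i\<in>{1..<j}. x j - x i)"

lemma Hx_eq: "Hx = Hxx"
  unfolding Hx_def Hxx_def vprod_shift by simp

lemma Hxx_nz: "Hxx \<noteq> 0"
proof -
  have "x j - x i \<noteq> 0" if "j \<in> {1..m}" "i \<in> {1..<j}" for i j
  proof
    assume "x j - x i = 0"
    then have "x j = x i" by simp
    moreover have "i \<in> {1..m}" using that by auto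
    ultimately have "j = i" using inj_onD[OF x_distinct] that(1) by blast
    then show False using that by auto
  qed
  then show ?thesis unfolding Hxx_def by (simp add: prod_zero_iff)
qed

lemma Dy_nz: "Dy \<noteq> 0"
proof -
  have "y i - y j \<noteq> 0" if "j \<in> {1..k}" "i \<in> {1..<j}" for i j
    using y_ne[of i j] that by simp
  then show ?thesis unfolding Dy_def by (simp add: prod_zero_iff)
qed

end

lemma prod_lessThan_add_split:
  "(\<Prod>a<m+(q::nat). f a) = (\<Prod>a<m. f a) * (\<Prod>i<q. f (m+i))"
  by (induction q) (simp_all add: ac_simps)

lemma det_rowscale:
  fixes s :: "nat \<Rightarrow> 'b::idom"
  shows "det (mat N N (\<lambda>(i, j). s i * f (i, j))) = (\<Prod>i<N. s i) * det (mat N N f)"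
proof -
  let ?D = "mat N N (\<lambda>(i, j). if i = j then s i else 0)"
  have "?D * mat N N f = mat N N (\<lambda>(i, j). s i * f (i, j))"
  proof (rule eq_matI)
    fix i j assume "i < dim_row (mat N N (\<lambda>(i, j). s i * f (i, j)))" "j < dim_col (mat N N (\<lambda>(i, j). s i * f (i, j)))"
    then have ij: "i < N" "j < N" by simp_all
    have "(?D * mat N N f) $$ (i, j) = (\<Sum>a<N. (if i = a then s i else 0) * f (a, j))"
      using ij by (simp add: scalar_prod_def atLeast0LessThan)
    also have "\<dots> = (\<Sum>a<N. if a = i then s i * f (i, j) else 0)"
      by (rule sum.cong) auto
    also have "\<dots> = s i * f (i, j)" using ij by simp
    finally show "(?D * mat N N f) $$ (i, j) = mat N N (\<lambda>(i, j). s i * f (i, j)) $$ (i, j)"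
      using ij by simp
  qed simp_all
  moreover have "det (?D * mat N N f) = det ?D * det (mat N N f)"
    by (rule det_mult) auto
  moreover have "det ?D = (\<Prod>i<N. s i)"
    by (subst det_lower_tri_mat') auto
  ultimately show ?thesis by simp
qed

lemma neg1_powi: "((- 1)::'b::field) powi z = (if even z then 1 else - 1)"
proof (cases "z \<ge> 0")
  case True
  then have "even (nat z) \<longleftrightarrow> even z" by (simp add: even_nat_iff)
  then show ?thesis using True by (simp add: power_int_def)
next
  case False
  then have "even (nat (- z)) \<longleftrightarrow> even z" by (simp add: even_nat_iff)
  then show ?thesis using False by (simp add: power_int_def)
qed

lemma neg1_pow: "((- 1)::'b::field) ^ N = (if even N then 1 else - 1)"
  by simp

context hsetup
begin

lemma L_monom_mult:
  assumes "degree f < N"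
  shows "L (monom 1 a * f) = (\<Sum>b<N. coeff f b * moment L (a + b))"
proof -
  have "monom 1 a * f = (\<Sum>b<N. Polynomial.smult (coeff f b) (monom 1 (a + b)))"
    by (subst poly_sum_monoms_lt[OF assms]) (simp add: sum_distrib_left mult_monom smult_monom)
  then show ?thesis by (simp add: L_sum L_smult moment_def)
qed

lemma L_mult_expand:
  assumes "degree f < N"
  shows "L (f * g) = (\<Sum>a<N. coeff f a * L (monom 1 a * g))"
proof -
  have "f * g = (\<Sum>a<N. Polynomial.smult (coeff f a) (monom 1 a * g))"
    by (subst poly_sum_monoms_lt[OF assms]) (simp only: sum_distrib_right, rule sum.cong, simp, rule monom_mult_smult)
  then show ?thesis by (simp add: L_sum L_smult)
qed

lemma hankel_det: "det (mat h h (\<lambda>(i, j). moment L (i + j))) = (\<Prod>i<h. \<omega> i)"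
proof -
  let ?H = "mat h h (\<lambda>(i, j). moment L (i + j))"
  let ?P = "mat h h (\<lambda>(b, j). coeff (p j) b)"
  let ?Q = "mat h h (\<lambda>(i, a). coeff (p i) a)"
  have HP: "?H * ?P = mat h h (\<lambda>(a, j). L (monom 1 a * p j))"
  proof (rule eq_matI)
    fix a j assume "a < dim_row (mat h h (\<lambda>(a, j). L (monom 1 a * p j)))" "j < dim_col (mat h h (\<lambda>(a, j). L (monom 1 a * p j)))"
    then have aj: "a < h" "j < h" by simp_all
    have "(?H * ?P) $$ (a, j) = (\<Sum>b<h. moment L (a + b) * coeff (p j) b)"
      using aj by (simp add: scalar_prod_def atLeast0LessThan)
    also have "\<dots> = (\<Sum>b<h. coeff (p j) b * moment L (a + b))"
      by (simp add: mult.commute)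
    also have "\<dots> = L (monom 1 a * p j)"
      by (rule L_monom_mult[symmetric]) (use aj in \<open>simp add: p_degree\<close>)
    finally show "(?H * ?P) $$ (a, j) = mat h h (\<lambda>(a, j). L (monom 1 a * p j)) $$ (a, j)"
      using aj by simp
  qed simp_all
  have QHP: "?Q * (?H * ?P) = mat h h (\<lambda>(i, j). if i = j then \<omega> j else 0)"
  proof (rule eq_matI)
    fix i j assume "i < dim_row (mat h h (\<lambda>(i, j). if i = j then \<omega> j else 0))" "j < dim_col (mat h h (\<lambda>(i, j). if i = j then \<omega> j else (0::'a)))"
    then have ij: "i < h" "j < h" by simp_all
    have "(?Q * (?H * ?P)) $$ (i, j) = (\<Sum>a<h. coeff (p i) a * L (monom 1 a * p j))"
      unfolding HP using ij by (simp add: scalar_prod_def atLeast0LessThan)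
    also have "\<dots> = L (p i * p j)"
      using ij by (simp add: L_mult_expand[of _ h] p_degree)
    finally show "(?Q * (?H * ?P)) $$ (i, j) = mat h h (\<lambda>(i, j). if i = j then \<omega> j else 0) $$ (i, j)"
      using ij by (simp add: p_orth)
  qed simp_all
  have dQ: "det ?Q = 1"
  proof -
    have "det ?Q = (\<Prod>i<h. coeff (p i) i)"
      by (rule det_lower_tri_mat') (simp add: coeff_eq_0 p_degree)
    also have "\<dots> = 1" using p_monic p_degree by (intro prod.neutral) metis
    finally show ?thesis .
  qed
  have dP: "det ?P = 1"
  proof -
    have "det ?P = (\<Prod>i<h. coeff (p i) i)"
      by (rule det_upper_tri_mat') (simp add: coeff_eq_0 p_degree)
    also have "\<dots> = 1" using p_monic p_degree by (intro prod.neutral) metis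
    finally show ?thesis .
  qed
  have d1: "det (?H * ?P) = det ?H * det ?P" by (rule det_mult) auto
  have "det (?Q * (?H * ?P)) = det ?Q * det (?H * ?P)"
    by (rule det_mult) auto
  then have "det (?Q * (?H * ?P)) = det ?Q * (det ?H * det ?P)" using d1 by simp
  then have "det ?H = det (mat h h (\<lambda>(i, j). if i = j then \<omega> j else 0))"
    using dQ dP QHP by simp
  also have "\<dots> = (\<Prod>i<h. \<omega> i)"
    by (subst det_lower_tri_mat') auto
  finally show ?thesis .
qed

lemma extra_Bl:
  assumes l: "l \<in> {1..k}"
  shows "extra (Bl l) c = - (y l ^ (k - n - 1 - c))"
proof -
  define j where "j = k - n - 1 - c"
  have Bp_split: "Bp = [:- y l, 1:] * Bl l"
    unfolding Bp_def Bl_def using l by (simp add: prod.remove)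
  have "poly (monom 1 j - [:y l ^ j:]) (y l) = 0" by (simp add: poly_monom)
  then obtain Q where Q: "monom 1 j - [:y l ^ j:] = [:- y l, 1:] * Q"
    by (metis dvdE poly_eq_0_iff_dvd)
  have "Bl l * monom 1 j = Polynomial.smult (y l ^ j) (Bl l) + Bp * Q"
  proof -
    have "Bl l * monom 1 j = Bl l * (monom 1 j - [:y l ^ j:]) + Bl l * [:y l ^ j:]"
      by (simp add: algebra_simps)
    also have "Bl l * (monom 1 j - [:y l ^ j:]) = Bp * Q"
      unfolding Q Bp_split by (simp only: ac_simps)
    also have "Bl l * [:y l ^ j:] = Polynomial.smult (y l ^ j) (Bl l)"
      by simp
    finally show ?thesis by (simp add: ac_simps)
  qed
  then have "Bl l * monom 1 j mod Bp = Polynomial.smult (y l ^ j) (Bl l) mod Bp"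
    by simp
  also have "\<dots> = Polynomial.smult (y l ^ j) (Bl l)"
  proof (rule mod_poly_less)
    have "degree (Polynomial.smult (y l ^ j) (Bl l)) \<le> degree (Bl l)"
      by (rule degree_smult_le)
    moreover have "degree (Bl l) = k - 1" by (rule deg_Bl[OF l])
    moreover have "k \<ge> 1" using l by simp
    ultimately show "degree (Polynomial.smult (y l ^ j) (Bl l)) < degree Bp"
      unfolding deg_Bp by linarith
  qed
  finally show ?thesis
    unfolding extra_def j_def[symmetric]
    using deg_Bl[OF l] lead_Bl[of l] by simp
qed

end

context hsetup
begin

abbreviation "Gp \<equiv> det (mat n n (\<lambda>(i, j). mod_moment L m x k y (i + j)))"

lemma det_chain: "det (Zm Gfin p) = Dy * (fls_const Hx * Gp * (- 1) ^ (k - n))"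
proof -
  have c1: "Zm Xr Xc * Tm B3 = Zm Xr B3" by (rule col_change) (use B3_deg in auto)
  have c2: "Zm Xr Xc * Tm p = Zm Xr p" by (rule col_change) (simp add: p_degree)
  have r: "Sm Gfin * Zm Xr p = Zm Gfin p" by (rule row_change[OF Gfin_deg])
  have d1: "det (Zm Xr B3) = det (Zm Xr Xc)"
  proof -
    have "det (Zm Xr Xc * Tm B3) = det (Zm Xr Xc) * det (Tm B3)"
      by (rule det_mult[OF Zm_carrier Tm_carrier])
    then show ?thesis using c1 det_Tm[OF B3_deg] by simp
  qed
  have d2: "det (Zm Xr p) = det (Zm Xr Xc)"
  proof -
    have "det (Zm Xr Xc * Tm p) = det (Zm Xr Xc) * det (Tm p)"
      by (rule det_mult[OF Zm_carrier Tm_carrier])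
    then show ?thesis using c2 det_Tm[OF p_deg_P] by simp
  qed
  have "det (Sm Gfin * Zm Xr p) = det (Sm Gfin) * det (Zm Xr p)"
    by (rule det_mult[OF Sm_carrier Zm_carrier])
  then have "det (Zm Gfin p) = Dy * det (Zm Xr B3)"
    using r d1 d2 det_Sm_Gfin det_Sk by simp
  then show ?thesis using det_Z3 by simp
qed

lemma Zfin_entry:
  assumes r: "r < DD" and c: "c < DD"
  shows "Zm Gfin p $$ (r, c) =
   (if c < P then (if r < m then fls_const (poly (p c) (x (r + 1)))
       else if r - m < k then - q_fun L p c (y (r - m + 1))
       else fls_const (L (p c * p (r - m - k))))
    else (if r < m then 0 else - (y (r - m + 1) ^ (k - n - 1 - (c - P)))))"
proof -
  have l: "r - m < k \<Longrightarrow> r - m + 1 \<in> {1..k}" by simp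
  show ?thesis
  proof (cases "c < P")
    case True
    then show ?thesis using r c
      by (auto simp: Zm_def ev_def Gfin_def rho_Bl q_fun_eq rho_Bp)
  next
    case False
    then have "r - m < k" if "\<not> r < m" using r c that by (auto simp: DD_def P_def nn_def max_def split: if_splits)
    then show ?thesis using r c False
      by (auto simp: Zm_def Gfin_def extra_Bl)
  qed
qed


definition "Mmat = mat (m + k) (m + k) (\<lambda>(r, c).
              if r < m then fls_const (poly (p (n - k + c)) (x (r + 1)))
              else q_fun L p (n - k + c) (y (r - m + 1)))"

definition "Nmat = mat (m + k) (m + k) (\<lambda>(r, c).
              if r < m then
                (if c < k - n then 0 else fls_const (poly (p (c - (k - n))) (x (r + 1))))
              else
                (if c < k - n then y (r - m + 1) ^ (k - n - 1 - c)
                 else q_fun L p (c - (k - n)) (y (r - m + 1))))"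

lemma sign_prod: "(\<Prod>i<m + k. if i < m then 1 else - 1) = ((- 1)::'a fls) ^ k"
  by (simp add: prod_lessThan_add_split)

lemma case_ge:
  assumes kn: "k \<le> n"
  shows "det (Zm Gfin p) = (- 1) ^ ((n - k) * (m + k)) * (fls_const (\<Prod>i<n - k. \<omega> i) * ((- 1) ^ k * det Mmat))"
proof -
  let ?Z = "Zm Gfin p"
  have DDe: "DD = (n - k) + (m + k)" using kn by (simp add: DD_def nn_def)
  have PDD: "P = DD" using kn by (simp add: DD_def nn_def P_def)
  have car: "?Z \<in> carrier_mat ((n - k) + (m + k)) ((n - k) + (m + k))"
    using Zm_carrier DDe by simp
  define B where "B = mat ((n - k) + (m + k)) ((n - k) + (m + k)) (\<lambda>(i, j).
     ?Z $$ ((if i < n - k then i + (m + k) else i - (n - k)), j))"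
  have "det ?Z = (- 1) ^ ((n - k) * (m + k)) * det B"
    unfolding B_def by (rule det_swap_rows[OF car])
  also have "det B = det (mat (n - k) (n - k) (\<lambda>(i, j). B $$ (i, j))) *
      det (mat (m + k) (m + k) (\<lambda>(i, j). B $$ (n - k + i, n - k + j)))"
  proof (rule det_split)
    show "B \<in> carrier_mat (n - k + (m + k)) (n - k + (m + k))" by (simp add: B_def)
    fix i j assume ij: "i < n - k" "n - k \<le> j" "j < n - k + (m + k)"
    then show "B $$ (i, j) = 0"
      unfolding B_def using kn by (simp add: Zfin_entry DDe PDD[symmetric] p_orth P_def)
  qed
  also have "det (mat (n - k) (n - k) (\<lambda>(i, j). B $$ (i, j))) = fls_const (\<Prod>i<n - k. \<omega> i)"
  proof -
    have "det (mat (n - k) (n - k) (\<lambda>(i, j). B $$ (i, j))) = (\<Prod>i<n - k. B $$ (i, i))"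
    proof (rule det_lower_tri_mat')
      fix i j assume "i < j" "j < n - k"
      then show "B $$ (i, j) = 0"
        unfolding B_def using kn by (simp add: Zfin_entry DDe PDD[symmetric] p_orth P_def)
    qed
    also have "\<dots> = (\<Prod>i<n - k. fls_const (\<omega> i))"
      by (rule prod.cong) (use kn in \<open>simp_all add: B_def Zfin_entry DDe PDD[symmetric] p_orth P_def\<close>)
    finally show ?thesis by (simp add: fls_const_prod)
  qed
  also have "mat (m + k) (m + k) (\<lambda>(i, j). B $$ (n - k + i, n - k + j)) =
      mat (m + k) (m + k) (\<lambda>(i, j). (if i < m then 1 else - 1) * Mmat $$ (i, j))"
  proof (rule eq_matI)
    fix i j assume "i < dim_row (mat (m + k) (m + k) (\<lambda>(i, j). (if i < m then 1 else - 1) * Mmat $$ (i, j)))"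
      "j < dim_col (mat (m + k) (m + k) (\<lambda>(i, j). (if i < m then 1 else - 1 :: 'a fls) * Mmat $$ (i, j)))"
    then have ij: "i < m + k" "j < m + k" by simp_all
    show "mat (m + k) (m + k) (\<lambda>(i, j). B $$ (n - k + i, n - k + j)) $$ (i, j) =
      mat (m + k) (m + k) (\<lambda>(i, j). (if i < m then 1 else - 1) * Mmat $$ (i, j)) $$ (i, j)"
    proof -
      have "B $$ (n - k + i, n - k + j) = ?Z $$ (i, n - k + j)"
        using ij unfolding B_def by (subst index_mat) (auto simp: DDe)
      also have "\<dots> = (if i < m then 1 else - 1) * Mmat $$ (i, j)"
        using ij kn by (subst Zfin_entry) (auto simp: DDe P_def Mmat_def)
      finally show ?thesis using ij by simp
    qed
  qed simp_all
  also have "det (mat (m + k) (m + k) (\<lambda>(i, j). (if i < m then 1 else - 1) * Mmat $$ (i, j))) =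
     (- 1) ^ k * det Mmat"
  proof -
    have "det (mat (m + k) (m + k) (\<lambda>(i, j). (if i < m then 1 else - 1) * Mmat $$ (i, j))) =
      (\<Prod>i<m + k. if i < m then 1 else - 1) * det (mat (m + k) (m + k) (\<lambda>(i, j). Mmat $$ (i, j)))"
      using det_rowscale[where s="\<lambda>i. if i < m then 1 else - 1" and N="m + k" and f="\<lambda>(i, j). Mmat $$ (i, j)"]
      by (simp add: case_prod_beta)
    also have "mat (m + k) (m + k) (\<lambda>(i, j). Mmat $$ (i, j)) = Mmat"
      by (rule eq_matI) (simp_all add: Mmat_def)
    finally show ?thesis by (simp add: sign_prod)
  qed
  finally show ?thesis .
qed


lemma case_lt:
  assumes nk: "n < k"
  shows "det (Zm Gfin p) = (- 1) ^ ((k - n) * (m + n)) * ((- 1) ^ k * det Nmat)"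
proof -
  let ?Z = "Zm Gfin p"
  have DDe: "DD = (k - n) + (m + n)" using nk by (simp add: DD_def nn_def)
  have dims: "(k - n) + (m + n) = m + k" using nk by simp
  have car: "?Z \<in> carrier_mat ((k - n) + (m + n)) ((k - n) + (m + n))"
    using Zm_carrier DDe by simp
  define B where "B = mat ((k - n) + (m + n)) ((k - n) + (m + n)) (\<lambda>(i, j).
     ?Z $$ (i, if j < k - n then j + (m + n) else j - (k - n)))"
  have "det ?Z = (- 1) ^ ((k - n) * (m + n)) * det B"
    unfolding B_def by (rule det_swap_cols[OF car])
  also have "B = mat (m + k) (m + k) (\<lambda>(i, j). (if i < m then 1 else - 1) * Nmat $$ (i, j))"
  proof (rule eq_matI)
    fix i j assume "i < dim_row (mat (m + k) (m + k) (\<lambda>(i, j). (if i < m then 1 else - 1) * Nmat $$ (i, j)))"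
      "j < dim_col (mat (m + k) (m + k) (\<lambda>(i, j). (if i < m then 1 else - 1 :: 'a fls) * Nmat $$ (i, j)))"
    then have ij: "i < m + k" "j < m + k" by simp_all
    have "B $$ (i, j) = ?Z $$ (i, if j < k - n then j + (m + n) else j - (k - n))"
      using ij dims unfolding B_def by (subst index_mat) auto
    also have "\<dots> = (if i < m then 1 else - 1) * Nmat $$ (i, j)"
    proof (cases "j < k - n")
      case True
      then show ?thesis using ij nk
        by (subst Zfin_entry) (auto simp: DDe P_def Nmat_def)
    next
      case False
      then show ?thesis using ij nk
        by (subst Zfin_entry) (auto simp: DDe P_def Nmat_def)
    qed
    finally show "B $$ (i, j) = mat (m + k) (m + k) (\<lambda>(i, j). (if i < m then 1 else - 1) * Nmat $$ (i, j)) $$ (i, j)"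
      using ij by simp
  qed (simp_all add: B_def dims)
  also have "det (mat (m + k) (m + k) (\<lambda>(i, j). (if i < m then 1 else - 1) * Nmat $$ (i, j))) =
     (- 1) ^ k * det Nmat"
  proof -
    have "det (mat (m + k) (m + k) (\<lambda>(i, j). (if i < m then 1 else - 1) * Nmat $$ (i, j))) =
      (\<Prod>i<m + k. if i < m then 1 else - 1) * det (mat (m + k) (m + k) (\<lambda>(i, j). Nmat $$ (i, j)))"
      using det_rowscale[where s="\<lambda>i. if i < m then 1 else - 1" and N="m + k" and f="\<lambda>(i, j). Nmat $$ (i, j)"]
      by (simp add: case_prod_beta)
    also have "mat (m + k) (m + k) (\<lambda>(i, j). Nmat $$ (i, j)) = Nmat"
      by (rule eq_matI) (simp_all add: Nmat_def)
    finally show ?thesis by (simp add: sign_prod)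
  qed
  finally show ?thesis .
qed


lemma sign_ge:
  assumes kn: "k \<le> n"
  shows "((- 1)::'a fls) ^ ((n - k) * (m + k)) * (- 1) ^ k = (- 1) powi (int n * (int m - int k) + int k * int m)"
proof -
  define A where "A = int n * (int m - int k) + int k * int m"
  have e0: "int ((n - k) * (m + k) + k) = (int n - int k) * (int m + int k) + int k"
    by (simp only: of_nat_add of_nat_mult of_nat_diff[OF kn])
  have e: "int ((n - k) * (m + k) + k) = A + 2 * (int n * int k - int k * int m) - int k * (int k - 1)"
    unfolding e0 A_def by (simp add: algebra_simps)
  have ev: "even (int k * (int k - 1))" by auto
  have "even ((n - k) * (m + k) + k) \<longleftrightarrow> even (int ((n - k) * (m + k) + k))"
    by (simp only: even_of_nat)
  also have "\<dots> \<longleftrightarrow> even A" unfolding e using ev by simp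
  finally have par: "even ((n - k) * (m + k) + k) \<longleftrightarrow> even A" .
  have "((- 1)::'a fls) ^ ((n - k) * (m + k)) * (- 1) ^ k = (- 1) ^ ((n - k) * (m + k) + k)"
    by (simp add: power_add)
  also have "\<dots> = (- 1) powi A"
    unfolding neg1_powi neg1_pow using par by simp
  finally show ?thesis unfolding A_def .
qed

lemma sign_lt:
  assumes nk: "n < k"
  shows "((- 1)::'a fls) ^ ((k - n) * (m + n)) * (- 1) ^ k * (- 1) ^ (k - n) = (- 1) powi (int n * (int m - int k) + int k * int m)"
proof -
  define A where "A = int n * (int m - int k) + int k * int m"
  have kn': "n \<le> k" using nk by simp
  have e0: "int ((k - n) * (m + n) + k + (k - n)) = (int k - int n) * (int m + int n) + int k + (int k - int n)"
    by (simp only: of_nat_add of_nat_mult of_nat_diff[OF kn'])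
  have e: "int ((k - n) * (m + n) + k + (k - n)) = A + 2 * (int k * int n - int n * int m + int k) - int n * (int n + 1)"
    unfolding e0 A_def by (simp add: algebra_simps)
  have ev: "even (int n * (int n + 1))" by auto
  have "even ((k - n) * (m + n) + k + (k - n)) \<longleftrightarrow> even (int ((k - n) * (m + n) + k + (k - n)))"
    by (simp only: even_of_nat)
  also have "\<dots> \<longleftrightarrow> even A" unfolding e using ev by simp
  finally have par: "even ((k - n) * (m + n) + k + (k - n)) \<longleftrightarrow> even A" .
  have "((- 1)::'a fls) ^ ((k - n) * (m + n)) * (- 1) ^ k * (- 1) ^ (k - n) = (- 1) ^ ((k - n) * (m + n) + k + (k - n))"
    by (simp add: power_add)
  also have "\<dots> = (- 1) powi A"
    unfolding neg1_powi neg1_pow using par by simp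
  finally show ?thesis unfolding A_def .
qed

lemma main:
  "(k \<le> n \<longrightarrow> Gp / fls_const (det (mat (n - k) (n - k) (\<lambda>(i, j). moment L (i + j))))
      = (- 1) powi (int n * (int m - int k) + int k * int m) * det Mmat / (fls_const Hxx * Dy)) \<and>
   (n < k \<longrightarrow> Gp = (- 1) powi (int n * (int m - int k) + int k * int m) * det Nmat / (fls_const Hxx * Dy))"
proof (intro conjI impI)
  have h0: "fls_const Hxx \<noteq> 0" using Hxx_nz by simp
  have d0: "Dy \<noteq> 0" by (rule Dy_nz)
  {
    assume kn: "k \<le> n"
    let ?dH = "det (mat (n - k) (n - k) (\<lambda>(i, j). moment L (i + j)))"
    let ?S = "(- 1) powi (int n * (int m - int k) + int k * int m) :: 'a fls"
    have dH: "?dH = (\<Prod>i<n - k. \<omega> i)" by (rule hankel_det)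
    have c0: "fls_const ?dH \<noteq> 0" unfolding dH using \<omega>_nonzero by simp
    have "Dy * (fls_const Hx * Gp * (- 1) ^ (k - n)) =
        (- 1) ^ ((n - k) * (m + k)) * (fls_const ?dH * ((- 1) ^ k * det Mmat))"
      using det_chain case_ge[OF kn] dH by simp
    then have eq: "Gp * (fls_const Hxx * Dy) = ?S * det Mmat * fls_const ?dH"
      using kn sign_ge[OF kn] by (simp add: Hx_eq ac_simps)
    show "Gp / fls_const ?dH = ?S * det Mmat / (fls_const Hxx * Dy)"
      using eq h0 d0 c0 by (simp add: field_simps)
  }
  {
    assume nk: "n < k"
    let ?S = "(- 1) powi (int n * (int m - int k) + int k * int m) :: 'a fls"
    have "Dy * (fls_const Hx * Gp * (- 1) ^ (k - n)) = (- 1) ^ ((k - n) * (m + n)) * ((- 1) ^ k * det Nmat)"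
      using det_chain case_lt[OF nk] by simp
    then have "Dy * (fls_const Hx * Gp * (- 1) ^ (k - n)) * (- 1) ^ (k - n) =
         (- 1) ^ ((k - n) * (m + n)) * ((- 1) ^ k * det Nmat) * (- 1) ^ (k - n)" by simp
    moreover have "((- 1)::'a fls) ^ (k - n) * (- 1) ^ (k - n) = 1"
      by (simp add: power_add[symmetric])
    ultimately have "Dy * fls_const Hx * Gp = (- 1) ^ ((k - n) * (m + n)) * (- 1) ^ k * (- 1) ^ (k - n) * det Nmat"
      by (simp add: ac_simps)
    then have eq: "Gp * (fls_const Hxx * Dy) = ?S * det Nmat"
      using sign_lt[OF nk] by (simp add: Hx_eq ac_simps)
    show "Gp = ?S * det Nmat / (fls_const Hxx * Dy)"
      using eq h0 d0 by (simp add: field_simps)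
  }
qed

end

theorem theorem1:
  fixes L :: "'a::field_char_0 poly \<Rightarrow> 'a"
    and p :: "nat \<Rightarrow> 'a poly"
    and \<omega> :: "nat \<Rightarrow> 'a"
    and k m n :: nat
    and x :: "nat \<Rightarrow> 'a"
    and y :: "nat \<Rightarrow> 'a fls"
  assumes L_add: "\<And>f g. L (f + g) = L f + L g"
    and L_smult: "\<And>c f. L (Polynomial.smult c f) = c * L f"
    and p_monic: "\<And>j. lead_coeff (p j) = 1"
    and p_degree: "\<And>j. degree (p j) = j"
    and p_orth: "\<And>i j. L (p i * p j) = (if i = j then \<omega> j else 0)"
    and \<omega>_nonzero: "\<And>j. \<omega> j \<noteq> 0"
    and x_distinct: "inj_on x {1..m}"
    and y_distinct: "inj_on y {1..k}"
    and y_large: "\<And>l. l \<in> {1..k} \<Longrightarrow> fls_subdegree (y l) < 0"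
  shows
    "(k \<le> n \<longrightarrow>
       det (mat n n (\<lambda>(i, j). mod_moment L m x k y (i + j)))
         / fls_const (det (mat (n - k) (n - k) (\<lambda>(i, j). moment L (i + j))))
       = (- 1) powi (int n * (int m - int k) + int k * int m)
         * det (mat (m + k) (m + k) (\<lambda>(r, c).
              if r < m then fls_const (poly (p (n - k + c)) (x (r + 1)))
              else q_fun L p (n - k + c) (y (r - m + 1))))
         / (fls_const (\<Prod>j\<in>{1..m}. \<Prod>i\<in>{1..<j}. x j - x i)
            * (\<Prod>j\<in>{1..k}. \<Prod>i\<in>{1..<j}. y i - y j)))
     \<and>
     (n < k \<longrightarrow>
       det (mat n n (\<lambda>(i, j). mod_moment L m x k y (i + j)))
       = (- 1) powi (int n * (int m - int k) + int k * int m)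
         * det (mat (m + k) (m + k) (\<lambda>(r, c).
              if r < m then
                (if c < k - n then 0 else fls_const (poly (p (c - (k - n))) (x (r + 1))))
              else
                (if c < k - n then y (r - m + 1) ^ (k - n - 1 - c)
                 else q_fun L p (c - (k - n)) (y (r - m + 1)))))
         / (fls_const (\<Prod>j\<in>{1..m}. \<Prod>i\<in>{1..<j}. x j - x i)
            * (\<Prod>j\<in>{1..k}. \<Prod>i\<in>{1..<j}. y i - y j)))"
proof -
  interpret hsetup L p \<omega> k m n x y
    by unfold_locales (use assms in auto)
  show ?thesis using main unfolding Mmat_def Nmat_def Hxx_def Dy_def .
qed

end
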